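(* Let $\mathbb{K}$ be a skew field, $n\ge 2$, and let $\theta$ be a non-trivial collineation of $\mathsf{PG}(n,\mathbb{K})$ which is a polar $\{2,2'\}$-kangaroo. Then $\theta$ is a central collineation (an elation or a homology), or $n=2$ and $\theta$ is a Baer collineation.
   Context: Polar positions: for incident point–hyperplane pairs $(p,H),(p',H')$ of $\mathsf{PG}(n,\mathbb{K})$, the position is $2$ or $2'$ if and only if $p\neq p'$, $H\neq H'$, and ($p\in H'$ or $p'\in H$). A collineation $\theta$ is a polar $\{2,2'\}$-kangaroo if no incident pair $(p,H)$ is at position $2$ or $2'$ from $(p^\theta,H^\theta)$. A central collineation is a collineation fixing every point of some hyperplane (equivalently, stabilising every line through some point). A Baer subplane of $\mathsf{PG}(2,\mathbb{K})$ is a subplane such that every line of $\mathsf{PG}(2,\mathbb{K})$ contains at least one of its points and every point lies on at least one of its lines; a Baer collineation is a collineation whose fixed points and lines form a Baer subplane. *)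

theory Defs
  imports Main
begin

text \<open>The underlying left vector space K^(n+1) is modelled as functions nat => K vanishing
  outside {0..n}; scalars act on the left.  A point is a 1-dimensional subspace
  (a set of vectors), a hyperplane is the kernel of a non-zero linear functional
  x |-> sum x_i a_i (which is left-linear).  Incidence is inclusion.\<close>

definition vecs :: "nat \<Rightarrow> (nat \<Rightarrow> 'k::division_ring) set" where
  "vecs n = {v. \<forall>i>n. v i = 0}"

definition pg_points :: "nat \<Rightarrow> (nat \<Rightarrow> 'k::division_ring) set set" where
  "pg_points n = {{(\<lambda>i. c * v i) | c. True} | v. v \<in> vecs n \<and> v \<noteq> (\<lambda>_. 0)}"

definition pg_hyperplanes :: "nat \<Rightarrow> (nat \<Rightarrow> 'k::division_ring) set set" where
  "pg_hyperplanes n = {{x \<in> vecs n. (\<Sum>i\<le>n. x i * a i) = 0} | a. a \<in> vecs n \<and> a \<noteq> (\<lambda>_. 0)}"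

definition vsum :: "(nat \<Rightarrow> 'k::division_ring) set \<Rightarrow> (nat \<Rightarrow> 'k) set \<Rightarrow> (nat \<Rightarrow> 'k) set" where
  "vsum A B = {(\<lambda>i. a i + b i) | a b. a \<in> A \<and> b \<in> B}"

text \<open>r lies on the line spanned by the points p and q (for p = q: r = p).\<close>
definition collinear_pts :: "(nat \<Rightarrow> 'k::division_ring) set \<Rightarrow> _ \<Rightarrow> _ \<Rightarrow> bool" where
  "collinear_pts p q r \<longleftrightarrow> r \<subseteq> vsum p q"

definition collineation :: "nat \<Rightarrow> ((nat \<Rightarrow> 'k::division_ring) set \<Rightarrow> (nat \<Rightarrow> 'k) set) \<Rightarrow> bool" where
  "collineation n \<theta> \<longleftrightarrow> bij_betw \<theta> (pg_points n) (pg_points n) \<and>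
     (\<forall>p\<in>pg_points n. \<forall>q\<in>pg_points n. \<forall>r\<in>pg_points n.
        collinear_pts p q r \<longleftrightarrow> collinear_pts (\<theta> p) (\<theta> q) (\<theta> r))"

text \<open>Image of a hyperplane H under the point map: the union of the images of the points of H
  (a subspace is the union of the 1-dimensional subspaces it contains).\<close>
definition hyp_image :: "nat \<Rightarrow> ((nat \<Rightarrow> 'k::division_ring) set \<Rightarrow> (nat \<Rightarrow> 'k) set) \<Rightarrow> (nat \<Rightarrow> 'k) set \<Rightarrow> (nat \<Rightarrow> 'k) set" where
  "hyp_image n \<theta> H = \<Union> (\<theta> ` {p \<in> pg_points n. p \<subseteq> H})"

definition pos_2_2' :: "'v set \<Rightarrow> 'v set \<Rightarrow> 'v set \<Rightarrow> 'v set \<Rightarrow> bool" where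
  "pos_2_2' p H p' H' \<longleftrightarrow> p \<noteq> p' \<and> H \<noteq> H' \<and> (p \<subseteq> H' \<or> p' \<subseteq> H)"

definition polar_22_kangaroo :: "nat \<Rightarrow> ((nat \<Rightarrow> 'k::division_ring) set \<Rightarrow> (nat \<Rightarrow> 'k) set) \<Rightarrow> bool" where
  "polar_22_kangaroo n \<theta> \<longleftrightarrow>
     (\<forall>p\<in>pg_points n. \<forall>H\<in>pg_hyperplanes n. p \<subseteq> H \<longrightarrow>
        \<not> pos_2_2' p H (\<theta> p) (hyp_image n \<theta> H))"

definition central_collineation :: "nat \<Rightarrow> ((nat \<Rightarrow> 'k::division_ring) set \<Rightarrow> (nat \<Rightarrow> 'k) set) \<Rightarrow> bool" where
  "central_collineation n \<theta> \<longleftrightarrow> collineation n \<theta> \<and>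
     (\<exists>H\<in>pg_hyperplanes n. \<forall>p\<in>pg_points n. p \<subseteq> H \<longrightarrow> \<theta> p = p)"

definition subplane :: "(nat \<Rightarrow> 'k::division_ring) set set \<Rightarrow> (nat \<Rightarrow> 'k) set set \<Rightarrow> bool" where
  "subplane S L \<longleftrightarrow> S \<subseteq> pg_points 2 \<and> L \<subseteq> pg_hyperplanes 2 \<and>
     (\<forall>p\<in>S. \<forall>q\<in>S. p \<noteq> q \<longrightarrow> (\<exists>l\<in>L. p \<subseteq> l \<and> q \<subseteq> l)) \<and>
     (\<forall>l\<in>L. \<forall>m\<in>L. l \<noteq> m \<longrightarrow> (\<exists>p\<in>S. p \<subseteq> l \<and> p \<subseteq> m)) \<and>
     (\<exists>a\<in>S. \<exists>b\<in>S. \<exists>c\<in>S. \<exists>d\<in>S. distinct [a,b,c,d] \<and>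
        (\<forall>x\<in>{a,b,c,d}. \<forall>y\<in>{a,b,c,d}. \<forall>z\<in>{a,b,c,d}.
           distinct [x,y,z] \<longrightarrow> \<not> collinear_pts x y z))"

definition baer_subplane :: "(nat \<Rightarrow> 'k::division_ring) set set \<Rightarrow> (nat \<Rightarrow> 'k) set set \<Rightarrow> bool" where
  "baer_subplane S L \<longleftrightarrow> subplane S L \<and>
     (\<forall>l\<in>pg_hyperplanes 2. \<exists>p\<in>S. p \<subseteq> l) \<and>
     (\<forall>p\<in>pg_points 2. \<exists>l\<in>L. p \<subseteq> l)"

definition baer_collineation :: "((nat \<Rightarrow> 'k::division_ring) set \<Rightarrow> (nat \<Rightarrow> 'k) set) \<Rightarrow> bool" where
  "baer_collineation \<theta> \<longleftrightarrow> collineation 2 \<theta> \<and>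
     baer_subplane {p \<in> pg_points 2. \<theta> p = p} {l \<in> pg_hyperplanes 2. hyp_image 2 \<theta> l = l}"

end

theory Submission
  imports Defs
begin

abbreviation ev :: "nat \<Rightarrow> (nat \<Rightarrow> 'k::division_ring) \<Rightarrow> (nat \<Rightarrow> 'k) \<Rightarrow> 'k" where
  "ev n x h \<equiv> (\<Sum>i\<le>n. x i * h i)"

abbreviation hyp :: "nat \<Rightarrow> (nat \<Rightarrow> 'k::division_ring) \<Rightarrow> (nat \<Rightarrow> 'k) set" where
  "hyp n h \<equiv> {x \<in> vecs n. ev n x h = 0}"

definition pt :: "(nat \<Rightarrow> 'k::division_ring) \<Rightarrow> (nat \<Rightarrow> 'k) set" where
  "pt v = {(\<lambda>i. c * v i) | c. True}"

lemma ev_lin: "ev n (\<lambda>i. a * x i + b * y i) h = a * ev n x h + b * ev n y h"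
  by (simp add: distrib_right sum.distrib sum_distrib_left mult.assoc)

lemma ev_smul: "ev n (\<lambda>i. a * x i) h = a * ev n x h"
  by (simp add: sum_distrib_left mult.assoc)

lemma ev_add: "ev n (\<lambda>i. x i + y i) h = ev n x h + ev n y h"
  by (simp add: distrib_right sum.distrib)

lemma ev_rlin: "ev n x (\<lambda>i. h i * a + g i * b) = ev n x h * a + ev n x g * b"
  by (simp add: distrib_left sum.distrib sum_distrib_right mult.assoc)

lemma ev_rsmul: "ev n x (\<lambda>i. h i * a) = ev n x h * a"
  by (simp add: sum_distrib_right mult.assoc)

lemma vecs_lin: "x \<in> vecs n \<Longrightarrow> y \<in> vecs n \<Longrightarrow> (\<lambda>i. a * x i + b * y i) \<in> vecs n"
  by (simp add: vecs_def)
lemma vecs_smul: "x \<in> vecs n \<Longrightarrow> (\<lambda>i. a * x i) \<in> vecs n"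
  by (simp add: vecs_def)
lemma vecs_add: "x \<in> vecs n \<Longrightarrow> y \<in> vecs n \<Longrightarrow> (\<lambda>i. x i + y i) \<in> vecs n"
  by (simp add: vecs_def)
lemma vecs_rlin: "x \<in> vecs n \<Longrightarrow> y \<in> vecs n \<Longrightarrow> (\<lambda>i. x i * a + y i * b) \<in> vecs n"
  by (simp add: vecs_def)

lemma pg_points_iff: "p \<in> pg_points n \<longleftrightarrow> (\<exists>v. v \<in> vecs n \<and> v \<noteq> (\<lambda>_. 0) \<and> p = pt v)"
  by (auto simp: pg_points_def pt_def)

lemma pg_hyperplanes_iff: "H \<in> pg_hyperplanes n \<longleftrightarrow> (\<exists>a. a \<in> vecs n \<and> a \<noteq> (\<lambda>_. 0) \<and> H = hyp n a)"
  by (auto simp: pg_hyperplanes_def)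

lemma pt_mem: "x \<in> pt v \<longleftrightarrow> (\<exists>c. x = (\<lambda>i. c * v i))" by (auto simp: pt_def)

lemma pt_self: "v \<in> pt v"
proof -
  have "v = (\<lambda>i. 1 * v i)" by simp
  then show ?thesis using pt_mem by blast
qed

lemma nz_scal: fixes v :: "nat \<Rightarrow> 'k::division_ring" assumes "v \<noteq> (\<lambda>_. 0)" "(\<lambda>i. c * v i) = (\<lambda>_. 0)" shows "c = 0"
proof -
  obtain j where "v j \<noteq> 0" using assms(1) by auto
  moreover have "c * v j = 0" using assms(2) by (metis)
  ultimately show ?thesis by simp
qed

lemma nz_scal2: fixes v :: "nat \<Rightarrow> 'k::division_ring" assumes "v \<noteq> (\<lambda>_. 0)" "c \<noteq> 0" shows "(\<lambda>i. c * v i) \<noteq> (\<lambda>_. 0)"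
  using nz_scal assms by blast


lemma pt_eqI: assumes "w \<in> pt v" "w \<noteq> (\<lambda>_. 0)" shows "pt w = pt v"
proof -
  obtain c where c: "w = (\<lambda>i. c * v i)" using assms(1) pt_mem by blast
  have "c \<noteq> 0" using assms(2) c by auto
  show ?thesis
  proof
    show "pt w \<subseteq> pt v"
    proof
      fix x assume "x \<in> pt w"
      then obtain d where d: "x = (\<lambda>i. d * w i)" using pt_mem by blast
      then have "x = (\<lambda>i. (d * c) * v i)" using c by (simp add: mult.assoc)
      then show "x \<in> pt v" using pt_mem by blast
    qed
    show "pt v \<subseteq> pt w"
    proof
      fix x assume "x \<in> pt v"
      then obtain d where d: "x = (\<lambda>i. d * v i)" using pt_mem by blast
      have e: "(d * inverse c) * (c * v i) = d * v i" for i
      proof -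
        have "(d * inverse c) * (c * v i) = d * ((inverse c * c) * v i)" by (simp only: mult.assoc)
        then show ?thesis using \<open>c \<noteq> 0\<close> by simp
      qed
      have "x = (\<lambda>i. (d * inverse c) * w i)" using d c e by simp
      then show "x \<in> pt w" using pt_mem by blast
    qed
  qed
qed

lemma pt_eq_iff: assumes "v \<noteq> (\<lambda>_. 0)" "w \<noteq> (\<lambda>_. 0)" shows "pt w = pt v \<longleftrightarrow> w \<in> pt v"
  using pt_eqI[OF _ assms(2)] pt_self by blast

lemma pt_zero: "(\<lambda>_. 0) \<in> pt v"
proof -
  have "(\<lambda>_. 0) = (\<lambda>i. 0 * v i)" by simp
  then show ?thesis using pt_mem by blast
qed

lemma pt_sub_hyp: assumes "v \<in> vecs n" shows "pt v \<subseteq> hyp n a \<longleftrightarrow> ev n v a = 0"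
proof
  assume "pt v \<subseteq> hyp n a" then show "ev n v a = 0" using pt_self by blast
next
  assume "ev n v a = 0" then show "pt v \<subseteq> hyp n a" using assms
    by (auto simp: ev_smul vecs_smul pt_mem)
qed

lemma vsum_pt: "vsum (pt a) (pt b) = {(\<lambda>i. \<alpha> * a i + \<beta> * b i) | \<alpha> \<beta>. True}"
  unfolding vsum_def
proof (intro equalityI subsetI)
  fix x assume "x \<in> {\<lambda>i. a' i + b' i |a' b'. a' \<in> pt a \<and> b' \<in> pt b}"
  then obtain \<alpha> \<beta> where "x = (\<lambda>i. (\<lambda>i. \<alpha> * a i) i + (\<lambda>i. \<beta> * b i) i)" by (auto simp: pt_mem)
  then show "x \<in> {(\<lambda>i. \<alpha> * a i + \<beta> * b i) | \<alpha> \<beta>. True}" by auto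
next
  fix x assume "x \<in> {(\<lambda>i. \<alpha> * a i + \<beta> * b i) | \<alpha> \<beta>. True}"
  then obtain \<alpha> \<beta> where x: "x = (\<lambda>i. \<alpha> * a i + \<beta> * b i)" by blast
  have "(\<lambda>i. \<alpha> * a i) \<in> pt a" "(\<lambda>i. \<beta> * b i) \<in> pt b" by (auto simp: pt_mem)
  have "\<exists>a' b'. x = (\<lambda>i. a' i + b' i) \<and> a' \<in> pt a \<and> b' \<in> pt b"
    by (rule exI[of _ "\<lambda>i. \<alpha> * a i"], rule exI[of _ "\<lambda>i. \<beta> * b i"]) (auto simp: pt_mem x)
  then show "x \<in> {\<lambda>i. a' i + b' i |a' b'. a' \<in> pt a \<and> b' \<in> pt b}" by blast
qed

lemma col_iff: "collinear_pts (pt a) (pt b) (pt r) \<longleftrightarrow> (\<exists>\<alpha> \<beta>. r = (\<lambda>i. \<alpha> * a i + \<beta> * b i))"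
proof
  assume "collinear_pts (pt a) (pt b) (pt r)"
  then have "r \<in> vsum (pt a) (pt b)" unfolding collinear_pts_def using pt_self by blast
  then have "r \<in> {(\<lambda>i. \<alpha> * a i + \<beta> * b i) | \<alpha> \<beta>. True}" by (subst vsum_pt[symmetric])
  then show "\<exists>\<alpha> \<beta>. r = (\<lambda>i. \<alpha> * a i + \<beta> * b i)" by simp
next
  assume "\<exists>\<alpha> \<beta>. r = (\<lambda>i. \<alpha> * a i + \<beta> * b i)"
  then obtain \<alpha> \<beta> where r: "r = (\<lambda>i. \<alpha> * a i + \<beta> * b i)" by blast
  show "collinear_pts (pt a) (pt b) (pt r)" unfolding collinear_pts_def vsum_pt
  proof
    fix x assume "x \<in> pt r"
    then obtain c where "x = (\<lambda>i. c * r i)" by (auto simp: pt_def)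
    then have "x = (\<lambda>i. (c*\<alpha>) * a i + (c*\<beta>) * b i)" using r
      by (simp add: distrib_left mult.assoc)
    then show "x \<in> {(\<lambda>i. \<alpha> * a i + \<beta> * b i) | \<alpha> \<beta>. True}" by blast
  qed
qed

lemma homog:
  fixes h :: "nat \<Rightarrow> nat \<Rightarrow> 'k::division_ring"
  assumes "finite I" "card I > m"
  shows "\<exists>x. (\<forall>i. i \<notin> I \<longrightarrow> x i = 0) \<and> (\<exists>i\<in>I. x i \<noteq> 0) \<and> (\<forall>j<m. (\<Sum>i\<in>I. x i * h j i) = 0)"
  using assms
proof (induction m arbitrary: I h)
  case 0
  then obtain i0 where "i0 \<in> I" by (metis card.empty ex_in_conv less_irrefl)
  then show ?case by (intro exI[of _ "\<lambda>i. if i = i0 then 1 else 0"]) auto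
next
  case (Suc m)
  show ?case
  proof (cases "\<forall>i\<in>I. h m i = 0")
    case True
    from Suc.IH[of I h] Suc.prems obtain x where x: "\<forall>i. i \<notin> I \<longrightarrow> x i = 0" "\<exists>i\<in>I. x i \<noteq> 0"
      "\<forall>j<m. (\<Sum>i\<in>I. x i * h j i) = 0" by auto
    have "(\<Sum>i\<in>I. x i * h m i) = 0" using True by simp
    then show ?thesis using x less_Suc_eq by auto
  next
    case False
    then obtain i0 where i0: "i0 \<in> I" "h m i0 \<noteq> 0" by auto
    define I' where "I' = I - {i0}"
    define h' where "h' = (\<lambda>j i. h j i - h m i * inverse (h m i0) * h j i0)"
    have fI': "finite I'" using Suc.prems I'_def by auto
    have cI': "card I' > m" using Suc.prems i0 I'_def by (simp add: card_Diff_singleton)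
    from Suc.IH[OF fI' cI', of h'] obtain x' where x': "\<forall>i. i \<notin> I' \<longrightarrow> x' i = 0" "\<exists>i\<in>I'. x' i \<noteq> 0"
      "\<forall>j<m. (\<Sum>i\<in>I'. x' i * h' j i) = 0" by auto
    define s where "s = (\<Sum>i\<in>I'. x' i * h m i)"
    define x where "x = x'(i0 := - s * inverse (h m i0))"
    have i0I': "i0 \<notin> I'" using I'_def by auto
    have sumx: "(\<Sum>i\<in>I. x i * g i) = (\<Sum>i\<in>I'. x' i * g i) + x i0 * g i0" for g
    proof -
      have "(\<Sum>i\<in>I. x i * g i) = x i0 * g i0 + (\<Sum>i\<in>I'. x i * g i)"
        using sum.remove[OF _ i0(1)] Suc.prems(1) I'_def by blast
      also have "(\<Sum>i\<in>I'. x i * g i) = (\<Sum>i\<in>I'. x' i * g i)"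
        using i0I' x_def by (intro sum.cong) auto
      finally show ?thesis by (simp add: add.commute)
    qed
    have "\<forall>j<Suc m. (\<Sum>i\<in>I. x i * h j i) = 0"
    proof (intro allI impI)
      fix j assume "j < Suc m"
      show "(\<Sum>i\<in>I. x i * h j i) = 0"
      proof (cases "j = m")
        case True
        have "x i0 * h m i0 = - s" using i0(2) x_def by (simp add: mult.assoc)
        then show ?thesis using sumx[of "h m"] True s_def by simp
      next
        case False
        then have "j < m" using \<open>j < Suc m\<close> by simp
        have "(\<Sum>i\<in>I'. x' i * h' j i) = (\<Sum>i\<in>I'. x' i * h j i) - (\<Sum>i\<in>I'. x' i * h m i) * (inverse (h m i0) * h j i0)"
          by (simp add: h'_def right_diff_distrib sum_subtractf sum_distrib_right mult.assoc)
        moreover have "x i0 * h j i0 = - s * (inverse (h m i0) * h j i0)" using x_def by (simp add: mult.assoc)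
        ultimately show ?thesis using sumx[of "h j"] x'(3) \<open>j < m\<close> s_def by simp
      qed
    qed
    moreover have "\<forall>i. i \<notin> I \<longrightarrow> x i = 0" using x'(1) x_def I'_def i0 by auto
    moreover have "\<exists>i\<in>I. x i \<noteq> 0" using x'(2) x_def I'_def i0I' by (metis DiffD1 fun_upd_other)
    ultimately show ?thesis by blast
  qed
qed

fun lspan :: "(nat \<Rightarrow> 'k::division_ring) list \<Rightarrow> (nat \<Rightarrow> 'k) set" where
  "lspan [] = {\<lambda>_. 0}"
| "lspan (w # vs) = {(\<lambda>i. c * w i + y i) | c y. y \<in> lspan vs}"

abbreviation PM :: "nat \<Rightarrow> (nat \<Rightarrow> nat \<Rightarrow> 'k::division_ring) \<Rightarrow> (nat \<Rightarrow> 'k) \<Rightarrow> nat \<Rightarrow> 'k" where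
  "PM n M x k \<equiv> (\<Sum>i\<le>n. x i * M i k)"

lemma elim:
  fixes vs :: "(nat \<Rightarrow> 'k::division_ring) list"
  assumes "set vs \<subseteq> vecs n"
  shows "\<exists>M. (\<forall>v\<in>set vs. \<forall>k. PM n M v k = 0) \<and> (\<forall>x\<in>vecs n. (\<forall>k. PM n M x k = 0) \<longrightarrow> x \<in> lspan vs)"
  using assms
proof (induction vs)
  case Nil
  define M :: "nat \<Rightarrow> nat \<Rightarrow> 'k" where "M = (\<lambda>i k. if i = k then 1 else 0)"
  have "x = (\<lambda>_. 0)" if "x \<in> vecs n" "\<forall>k. PM n M x k = 0" for x
  proof
    fix k
    show "x k = 0"
    proof (cases "k \<le> n")
      case True
      have "PM n M x k = (\<Sum>i\<le>n. if i = k then x k else 0)" by (intro sum.cong) (auto simp: M_def)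
      then have "PM n M x k = x k" using True by simp
      then show ?thesis using that by simp
    next
      case False then show ?thesis using that(1) by (simp add: vecs_def)
    qed
  qed
  then show ?case by auto
next
  case (Cons w vs)
  then obtain M where M: "\<forall>v\<in>set vs. \<forall>k. PM n M v k = 0"
     "\<forall>x\<in>vecs n. (\<forall>k. PM n M x k = 0) \<longrightarrow> x \<in> lspan vs" by auto
  have wv: "w \<in> vecs n" using Cons.prems by auto
  have PMlin: "PM n N (\<lambda>i. a * x i + b * y i) k = a * PM n N x k + b * PM n N y k" for N :: "nat \<Rightarrow> nat \<Rightarrow> 'k" and a b x y k
    by (simp add: distrib_right sum.distrib sum_distrib_left mult.assoc)
  show ?case
  proof (cases "\<forall>k. PM n M w k = 0")
    case True
    have lsp: "x \<in> lspan (w # vs)" if "x \<in> lspan vs" for x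
      using that by (simp, intro exI[of _ 0] exI[of _ x]) simp
    have "\<forall>x\<in>vecs n. (\<forall>k. PM n M x k = 0) \<longrightarrow> x \<in> lspan (w # vs)" using M(2) lsp by blast
    moreover have "\<forall>v\<in>set (w#vs). \<forall>k. PM n M v k = 0" using M(1) True by auto
    ultimately show ?thesis by blast
  next
    case False
    then obtain k0 where k0: "PM n M w k0 \<noteq> 0" by auto
    define d where "d = PM n M w k0"
    define M' where "M' = (\<lambda>i k. M i k - M i k0 * (inverse d * PM n M w k))"
    have PM': "PM n M' x k = PM n M x k - PM n M x k0 * (inverse d * PM n M w k)" for x k
      by (simp add: M'_def right_diff_distrib sum_subtractf sum_distrib_right mult.assoc)
    have A: "\<forall>v\<in>set (w # vs). \<forall>k. PM n M' v k = 0"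
    proof (intro ballI allI)
      fix v k assume "v \<in> set (w # vs)"
      then consider "v = w" | "v \<in> set vs" by auto
      then show "PM n M' v k = 0"
      proof cases
        case 1
        have "PM n M w k0 * (inverse d * PM n M w k) = PM n M w k"
          using k0 d_def by (simp add: mult.assoc[symmetric])
        then show ?thesis using 1 PM' by simp
      next
        case 2 then show ?thesis using PM' M(1) by simp
      qed
    qed
    have B: "x \<in> lspan (w # vs)" if "x \<in> vecs n" "\<forall>k. PM n M' x k = 0" for x
    proof -
      define e where "e = PM n M x k0 * inverse d"
      define y where "y = (\<lambda>i. 1 * x i + (- e) * w i)"
      have "PM n M y k = 0" for k
      proof -
        have "PM n M x k = e * PM n M w k" using that(2) PM'[of x k] e_def by (simp add: mult.assoc)
        then show ?thesis unfolding y_def PMlin by simp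
      qed
      moreover have "y \<in> vecs n" using that(1) wv unfolding y_def by (rule vecs_lin)
      ultimately have "y \<in> lspan vs" using M(2) by blast
      moreover have "x = (\<lambda>i. e * w i + y i)" unfolding y_def by auto
      ultimately show ?thesis by (simp, intro exI[of _ e] exI[of _ y]) simp
    qed
    show ?thesis using A B by blast
  qed
qed

lemma separation:
  fixes vs :: "(nat \<Rightarrow> 'k::division_ring) list"
  assumes "set vs \<subseteq> vecs n" "x \<in> vecs n" "x \<notin> lspan vs"
  shows "\<exists>h. h \<in> vecs n \<and> h \<noteq> (\<lambda>_. 0) \<and> (\<forall>v\<in>set vs. ev n v h = 0) \<and> ev n x h \<noteq> 0"
proof -
  obtain M where M: "\<forall>v\<in>set vs. \<forall>k. PM n M v k = 0"
     "\<forall>x\<in>vecs n. (\<forall>k. PM n M x k = 0) \<longrightarrow> x \<in> lspan vs" using elim[OF assms(1)] by blast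
  then obtain k where k: "PM n M x k \<noteq> 0" using assms by blast
  define h where "h = (\<lambda>i. if i \<le> n then M i k else 0)"
  have evh: "ev n v h = PM n M v k" for v by (simp add: h_def)
  have "h \<in> vecs n" by (simp add: h_def vecs_def)
  moreover have "h \<noteq> (\<lambda>_. 0)" using k evh[of x] by auto
  ultimately show ?thesis using evh M(1) k by auto
qed

lemma lspan2: "x \<in> lspan [a, b] \<longleftrightarrow> (\<exists>\<alpha> \<beta>. x = (\<lambda>i. \<alpha> * a i + \<beta> * b i))"
proof
  assume "x \<in> lspan [a, b]" then show "\<exists>\<alpha> \<beta>. x = (\<lambda>i. \<alpha> * a i + \<beta> * b i)" by auto
next
  assume "\<exists>\<alpha> \<beta>. x = (\<lambda>i. \<alpha> * a i + \<beta> * b i)"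
  then obtain \<alpha> \<beta> where "x = (\<lambda>i. \<alpha> * a i + \<beta> * b i)" by blast
  then show "x \<in> lspan [a, b]"
    by (simp, intro exI[of _ \<alpha>] exI[of _ "\<lambda>i. \<beta> * b i"]) auto
qed

lemma lspan1: "x \<in> lspan [a] \<longleftrightarrow> (\<exists>\<alpha>. x = (\<lambda>i. \<alpha> * a i))"
  by auto

lemma indep2:
  fixes a b :: "nat \<Rightarrow> 'k::division_ring"
  assumes "b \<noteq> (\<lambda>_. 0)" "pt a \<noteq> pt b" "a \<noteq> (\<lambda>_. 0)" "(\<lambda>i. \<alpha> * a i + \<beta> * b i) = (\<lambda>_. 0)"
  shows "\<alpha> = 0 \<and> \<beta> = 0"
proof -
  have e: "\<alpha> * a i + \<beta> * b i = 0" for i using assms(4) by metis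
  have "\<alpha> = 0"
  proof (rule ccontr)
    assume "\<alpha> \<noteq> 0"
    have "a i = (- (inverse \<alpha> * \<beta>)) * b i" for i
    proof -
      have "\<alpha> * a i = - (\<beta> * b i)" using e[of i] by (simp add: eq_neg_iff_add_eq_0)
      then have "inverse \<alpha> * (\<alpha> * a i) = inverse \<alpha> * (- (\<beta> * b i))" by simp
      then show ?thesis using \<open>\<alpha> \<noteq> 0\<close> by (simp add: mult.assoc[symmetric])
    qed
    then have "a = (\<lambda>i. (- (inverse \<alpha> * \<beta>)) * b i)" by blast
    then have "a \<in> pt b" using pt_mem by blast
    then have "pt a = pt b" using pt_eqI assms(3) by blast
    then show False using assms(2) by simp
  qed
  moreover have "(\<lambda>i. \<beta> * b i) = (\<lambda>_. 0)" using assms(4) \<open>\<alpha> = 0\<close> by simp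
  then have "\<beta> = 0" using nz_scal assms(1) by blast
  ultimately show ?thesis by simp
qed

lemma dep_gen:
  fixes w :: "nat \<Rightarrow> nat \<Rightarrow> 'k::division_ring"
  assumes "finite I" "card I > n + 1" "\<forall>i\<in>I. w i \<in> vecs n"
  shows "\<exists>l. (\<exists>i\<in>I. l i \<noteq> 0) \<and> (\<forall>j. (\<Sum>i\<in>I. l i * w i j) = 0)"
proof -
  obtain x where x: "\<exists>i\<in>I. x i \<noteq> 0" "\<forall>j<n+1. (\<Sum>i\<in>I. x i * w i j) = 0"
    using homog[OF assms(1,2), of "\<lambda>j i. w i j"] by blast
  have "(\<Sum>i\<in>I. x i * w i j) = 0" for j
  proof (cases "j < n + 1")
    case True then show ?thesis using x by simp
  next
    case False
    then have "\<forall>i\<in>I. w i j = 0" using assms(3) by (simp add: vecs_def)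
    then show ?thesis by simp
  qed
  then show ?thesis using x by blast
qed

lemma sum3: "(\<Sum>i\<in>{0,1,2::nat}. f i) = f 0 + f 1 + f 2"
  by (simp add: add.assoc)

lemma dep3:
  fixes x y z a b :: "nat \<Rightarrow> 'k::division_ring"
  assumes "x \<in> lspan [a, b]" "y \<in> lspan [a, b]" "z \<in> lspan [a, b]"
  shows "\<exists>l1 l2 l3. (l1 \<noteq> 0 \<or> l2 \<noteq> 0 \<or> l3 \<noteq> 0) \<and> (\<lambda>i. l1 * x i + l2 * y i + l3 * z i) = (\<lambda>_. 0)"
proof -
  obtain a1 b1 where 1: "x = (\<lambda>i. a1 * a i + b1 * b i)" using assms(1) lspan2 by blast
  obtain a2 b2 where 2: "y = (\<lambda>i. a2 * a i + b2 * b i)" using assms(2) lspan2 by blast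
  obtain a3 b3 where 3: "z = (\<lambda>i. a3 * a i + b3 * b i)" using assms(3) lspan2 by blast
  define h where "h = (\<lambda>(j::nat) (k::nat). if j = 0 then (if k = 0 then a1 else if k = 1 then a2 else a3)
                                 else (if k = 0 then b1 else if k = 1 then b2 else b3))"
  obtain l where l: "\<exists>i\<in>{0,1,2}. l i \<noteq> 0" "\<forall>j<2. (\<Sum>i\<in>{0,1,2}. l i * h j i) = 0"
    using homog[of "{0,1,2::nat}" 2 h] by auto
  have e0: "l 0 * a1 + l 1 * a2 + l 2 * a3 = 0" using l(2)[rule_format, of 0] by (simp add: sum3 h_def add.assoc)
  have e1: "l 0 * b1 + l 1 * b2 + l 2 * b3 = 0" using l(2)[rule_format, of 1] by (simp add: sum3 h_def add.assoc)
  have "l 0 * x i + l 1 * y i + l 2 * z i = (l 0 * a1 + l 1 * a2 + l 2 * a3) * a i + (l 0 * b1 + l 1 * b2 + l 2 * b3) * b i" for i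
    unfolding 1 2 3 by (simp add: algebra_simps)
  then have "(\<lambda>i. l 0 * x i + l 1 * y i + l 2 * z i) = (\<lambda>_. 0)" using e0 e1 by simp
  moreover have "l 0 \<noteq> 0 \<or> l 1 \<noteq> 0 \<or> l 2 \<noteq> 0" using l(1) by auto
  ultimately show ?thesis by blast
qed

lemma pt_nz: "p \<in> pg_points n \<Longrightarrow> \<exists>v. v \<in> vecs n \<and> v \<noteq> (\<lambda>_. 0) \<and> p = pt v"
  using pg_points_iff by blast

lemma col_lspan: "collinear_pts (pt a) (pt b) (pt r) \<longleftrightarrow> r \<in> lspan [a, b]"
  using col_iff lspan2 by blast

lemma exch_vec:
  fixes a b x y r :: "nat \<Rightarrow> 'k::division_ring"
  assumes "x \<in> lspan [a, b]" "y \<in> lspan [a, b]" "r \<in> lspan [a, b]"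
    "x \<noteq> (\<lambda>_. 0)" "y \<noteq> (\<lambda>_. 0)" "pt x \<noteq> pt y"
  shows "r \<in> lspan [x, y]"
proof -
  obtain l1 l2 l3 where l: "l1 \<noteq> 0 \<or> l2 \<noteq> 0 \<or> l3 \<noteq> 0" "(\<lambda>i. l1 * x i + l2 * y i + l3 * r i) = (\<lambda>_. 0)"
    using dep3[OF assms(1-3)] by blast
  have e: "l1 * x i + l2 * y i + l3 * r i = 0" for i using l(2) by metis
  have "l3 \<noteq> 0"
  proof
    assume "l3 = 0"
    then have "(\<lambda>i. l1 * x i + l2 * y i) = (\<lambda>_. 0)" using e by auto
    then have "l1 = 0 \<and> l2 = 0" using indep2[OF assms(5) assms(6) assms(4)] by blast
    then show False using l(1) \<open>l3 = 0\<close> by simp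
  qed
  have "r i = (- (inverse l3 * l1)) * x i + (- (inverse l3 * l2)) * y i" for i
  proof -
    have "l3 * r i = - (l1 * x i + l2 * y i)" using e[of i] by (simp add: add_eq_0_iff2 add.commute eq_neg_iff_add_eq_0)
    then have "inverse l3 * (l3 * r i) = inverse l3 * (- (l1 * x i + l2 * y i))" by simp
    then have "r i = inverse l3 * (- (l1 * x i + l2 * y i))" using \<open>l3 \<noteq> 0\<close> by (simp add: mult.assoc[symmetric])
    then show ?thesis by (simp add: algebra_simps)
  qed
  then show ?thesis using lspan2 by blast
qed

abbreviation unitv :: "nat \<Rightarrow> nat \<Rightarrow> 'k::division_ring" where
  "unitv k \<equiv> (\<lambda>j. if j = k then 1 else 0)"

lemma unitv_vecs: "k \<le> n \<Longrightarrow> unitv k \<in> vecs n"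
  by (simp add: vecs_def)

lemma ev_unitv: "k \<le> n \<Longrightarrow> ev n (unitv k) f = f k"
proof -
  assume k: "k \<le> n"
  have "ev n (unitv k) f = (\<Sum>i\<le>n. if i = k then f k else 0)" by (intro sum.cong) auto
  then show ?thesis using k by simp
qed

lemma nz_index: assumes "f \<in> vecs n" "f \<noteq> (\<lambda>_. 0)" shows "\<exists>i\<le>n. f i \<noteq> 0"
proof (rule ccontr)
  assume "\<not> (\<exists>i\<le>n. f i \<noteq> 0)"
  then have "f = (\<lambda>_. 0)"
  proof -
    assume a: "\<not> (\<exists>i\<le>n. f i \<noteq> 0)"
    show ?thesis
    proof
      fix i show "f i = 0" using a assms(1) by (cases "i \<le> n") (auto simp: vecs_def)
    qed
  qed
  then show False using assms(2) by simp
qed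

lemma ev_zero_all: assumes "f \<in> vecs n" "\<forall>x\<in>vecs n. ev n x f = 0" shows "f = (\<lambda>_. 0)"
proof (rule ccontr)
  assume "f \<noteq> (\<lambda>_. 0)"
  then obtain i where i: "i \<le> n" "f i \<noteq> 0" using nz_index assms(1) by blast
  have "ev n (unitv i) f = f i" using ev_unitv[OF i(1)] .
  moreover have "ev n (unitv i) f = 0" using bspec[OF assms(2) unitv_vecs[OF i(1)]] by simp
  ultimately show False using i(2) by simp
qed

lemma ev_lin3: "ev n (\<lambda>j. x j + a * u j + b * v j) h = ev n x h + a * ev n u h + b * ev n v h"
  by (simp add: distrib_right sum.distrib sum_distrib_left mult.assoc)

lemma vecs_lin3: "x \<in> vecs n \<Longrightarrow> u \<in> vecs n \<Longrightarrow> v \<in> vecs n \<Longrightarrow> (\<lambda>j. x j + a * u j + b * v j) \<in> vecs n"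
  by (simp add: vecs_def)

lemma ev_sumcomb: "ev n (\<lambda>j. \<Sum>i\<in>I. l i * w i j) f = (\<Sum>i\<in>I. l i * ev n (w i) f)"
proof -
  have "ev n (\<lambda>j. \<Sum>i\<in>I. l i * w i j) f = (\<Sum>j\<le>n. \<Sum>i\<in>I. l i * w i j * f j)"
    by (simp add: sum_distrib_right)
  also have "\<dots> = (\<Sum>i\<in>I. \<Sum>j\<le>n. l i * w i j * f j)" by (rule sum.swap)
  also have "\<dots> = (\<Sum>i\<in>I. l i * ev n (w i) f)" by (simp add: sum_distrib_left mult.assoc)
  finally show ?thesis .
qed

lemma sum3_0: "(a::'k::division_ring) + - b + - c = 0 \<Longrightarrow> a = b + c"
proof -
  assume h: "a + - b + - c = 0"
  then have "a - b = c" by simp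
  then show ?thesis by (metis add.commute diff_add_cancel)
qed

lemma hyp_kernel_rel:
  assumes "f \<in> vecs n" "f \<noteq> (\<lambda>_. 0)" "g \<in> vecs n" "hyp n f \<subseteq> hyp n g"
  shows "\<exists>c. \<forall>x\<in>vecs n. ev n x g = ev n x f * c"
proof -
  obtain i where i: "i \<le> n" "f i \<noteq> 0" using nz_index assms by blast
  define c where "c = inverse (f i) * g i"
  have "ev n x g = ev n x f * c" if x: "x \<in> vecs n" for x
  proof -
    define y where "y = (\<lambda>j. 1 * x j + (- (ev n x f * inverse (f i))) * unitv i j)"
    have "y \<in> vecs n" unfolding y_def using x unitv_vecs[OF i(1)] by (rule vecs_lin)
    moreover have "ev n y f = 0" unfolding y_def ev_lin ev_unitv[OF i(1)] using i(2)
      by (simp add: mult.assoc)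
    ultimately have "ev n y g = 0" using assms(4) by blast
    then have "ev n x g - ev n x f * inverse (f i) * g i = 0" unfolding y_def ev_lin ev_unitv[OF i(1)]
      by simp
    then show ?thesis by (simp add: c_def mult.assoc)
  qed
  then show ?thesis by blast
qed

lemma hyp_incl_eq:
  assumes "f \<in> vecs n" "f \<noteq> (\<lambda>_. 0)" "g \<in> vecs n" "g \<noteq> (\<lambda>_. 0)" "hyp n f \<subseteq> hyp n g"
  shows "hyp n f = hyp n g"
proof -
  obtain c where c: "\<forall>x\<in>vecs n. ev n x g = ev n x f * c" using hyp_kernel_rel assms by blast
  have "c \<noteq> 0"
  proof
    assume "c = 0"
    then have "g = (\<lambda>_. 0)" using ev_zero_all[OF assms(3)] c by simp
    then show False using assms(4) by simp
  qed
  show ?thesis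
  proof
    show "hyp n g \<subseteq> hyp n f"
    proof
      fix x assume x: "x \<in> hyp n g"
      then have "ev n x f * c = 0" using bspec[OF c, of x] by simp
      then show "x \<in> hyp n f" using x \<open>c \<noteq> 0\<close> by simp
    qed
  qed (rule assms(5))
qed

lemma hyp_rep: "H \<in> pg_hyperplanes n \<Longrightarrow> \<exists>f. f \<in> vecs n \<and> f \<noteq> (\<lambda>_. 0) \<and> H = hyp n f"
  using pg_hyperplanes_iff by blast

lemma hyp_pts_eq:
  assumes "H1 \<in> pg_hyperplanes n" "H2 \<in> pg_hyperplanes n"
    "\<forall>p\<in>pg_points n. p \<subseteq> H1 \<longrightarrow> p \<subseteq> H2"
  shows "H1 = H2"
proof -
  obtain f where f: "f \<in> vecs n" "f \<noteq> (\<lambda>_. 0)" "H1 = hyp n f" using hyp_rep assms(1) by blast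
  obtain g where g: "g \<in> vecs n" "g \<noteq> (\<lambda>_. 0)" "H2 = hyp n g" using hyp_rep assms(2) by blast
  have "hyp n f \<subseteq> hyp n g"
  proof
    fix x assume x: "x \<in> hyp n f"
    show "x \<in> hyp n g"
    proof (cases "x = (\<lambda>_. 0)")
      case True then show ?thesis using x by simp
    next
      case False
      then have "pt x \<in> pg_points n" using x pg_points_iff by blast
      moreover have "pt x \<subseteq> H1" using x f(3) pt_sub_hyp by blast
      ultimately have "pt x \<subseteq> H2" using assms(3) by blast
      then show ?thesis using pt_self g(3) by blast
    qed
  qed
  then show ?thesis using hyp_incl_eq[OF f(1,2) g(1,2)] f(3) g(3) by simp
qed

lemma decomp:
  assumes "f \<in> vecs n" "f \<noteq> (\<lambda>_. 0)" "g \<in> vecs n" "g \<noteq> (\<lambda>_. 0)" "hyp n f \<noteq> hyp n g"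
  shows "\<exists>u v. u \<in> vecs n \<and> v \<in> vecs n \<and> ev n u f = 1 \<and> ev n u g = 0 \<and> ev n v f = 0 \<and> ev n v g = 1"
proof -
  have "\<not> hyp n g \<subseteq> hyp n f" using hyp_incl_eq[OF assms(3,4,1,2)] assms(5) by auto
  then obtain u0 where u0: "u0 \<in> vecs n" "ev n u0 g = 0" "ev n u0 f \<noteq> 0" by auto
  have "\<not> hyp n f \<subseteq> hyp n g" using hyp_incl_eq[OF assms(1,2,3,4)] assms(5) by auto
  then obtain v0 where v0: "v0 \<in> vecs n" "ev n v0 f = 0" "ev n v0 g \<noteq> 0" by auto
  define u where "u = (\<lambda>i. inverse (ev n u0 f) * u0 i)"
  define v where "v = (\<lambda>i. inverse (ev n v0 g) * v0 i)"
  have "u \<in> vecs n" "v \<in> vecs n" using u0 v0 by (simp_all add: u_def v_def vecs_smul)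
  moreover have "ev n u f = 1" "ev n u g = 0" using u0 by (simp_all add: u_def ev_smul)
  moreover have "ev n v f = 0" "ev n v g = 1" using v0 by (simp_all add: v_def ev_smul)
  ultimately show ?thesis by blast
qed

lemma decomp_rep:
  assumes "u \<in> vecs n" "v \<in> vecs n" "ev n u f = 1" "ev n u g = 0" "ev n v f = 0" "ev n v g = 1"
    "hyp n f \<inter> hyp n g \<subseteq> hyp n b" "x \<in> vecs n"
  shows "ev n x b = ev n x f * ev n u b + ev n x g * ev n v b"
proof -
  define y where "y = (\<lambda>j. x j + (- ev n x f) * u j + (- ev n x g) * v j)"
  have "y \<in> vecs n" unfolding y_def using assms by (intro vecs_lin3)
  moreover have "ev n y f = 0" "ev n y g = 0" unfolding y_def ev_lin3 using assms by simp_all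
  ultimately have "ev n y b = 0" using assms(7) by blast
  moreover have eq: "ev n y b = ev n x b + (- ev n x f) * ev n u b + (- ev n x g) * ev n v b"
    unfolding y_def by (rule ev_lin3)
  ultimately have "ev n x b + (- ev n x f) * ev n u b + (- ev n x g) * ev n v b = 0" by simp
  then have "ev n x b + - (ev n x f * ev n u b) + - (ev n x g * ev n v b) = 0"
    unfolding mult_minus_left .
  then show ?thesis by (rule sum3_0)
qed

lemma pt_pt: "v \<in> vecs n \<Longrightarrow> v \<noteq> (\<lambda>_. 0) \<Longrightarrow> pt v \<in> pg_points n"
  using pg_points_iff by blast

lemma col_refl1: "collinear_pts (pt a) (pt b) (pt a)"
proof -
  have "a = (\<lambda>i. 1 * a i + 0 * b i)" by simp
  then show ?thesis using col_iff by blast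
qed

lemma col_refl2: "collinear_pts (pt a) (pt b) (pt b)"
proof -
  have "b = (\<lambda>i. 0 * a i + 1 * b i)" by simp
  then show ?thesis using col_iff by blast
qed

lemma col_swap: "collinear_pts (pt a) (pt b) (pt r) \<Longrightarrow> collinear_pts (pt b) (pt a) (pt r)"
proof -
  assume "collinear_pts (pt a) (pt b) (pt r)"
  then obtain \<alpha> \<beta> where "r = (\<lambda>i. \<alpha> * a i + \<beta> * b i)" using col_iff by blast
  then have "r = (\<lambda>i. \<beta> * b i + \<alpha> * a i)" by (simp add: add.commute)
  then show ?thesis using col_iff by blast
qed

lemma P_refl1: "p \<in> pg_points n \<Longrightarrow> q \<in> pg_points n \<Longrightarrow> collinear_pts p q p"
proof -
  assume "p \<in> pg_points n" "q \<in> pg_points n"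
  then obtain a b where "p = pt a" "q = pt b" using pt_nz by meson
  then show ?thesis using col_refl1 by simp
qed
lemma P_refl2: "p \<in> pg_points n \<Longrightarrow> q \<in> pg_points n \<Longrightarrow> collinear_pts p q q"
proof -
  assume "p \<in> pg_points n" "q \<in> pg_points n"
  then obtain a b where "p = pt a" "q = pt b" using pt_nz by meson
  then show ?thesis using col_refl2 by simp
qed
lemma P_swap: "p \<in> pg_points n \<Longrightarrow> q \<in> pg_points n \<Longrightarrow> r \<in> pg_points n \<Longrightarrow>
   collinear_pts p q r \<Longrightarrow> collinear_pts q p r"
proof -
  assume "p \<in> pg_points n" "q \<in> pg_points n" "r \<in> pg_points n" "collinear_pts p q r"
  moreover obtain a b c where "p = pt a" "q = pt b" "r = pt c" using pt_nz calculation(1-3) by meson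
  ultimately show ?thesis using col_swap by simp
qed

lemma P_exch:
  assumes P: "p \<in> pg_points n" "q \<in> pg_points n" "x \<in> pg_points n" "y \<in> pg_points n" "r \<in> pg_points n"
    and "collinear_pts p q x" "collinear_pts p q y" "collinear_pts p q r" "x \<noteq> y"
  shows "collinear_pts x y r"
proof -
  obtain a where a: "p = pt a" using pt_nz P(1) by blast
  obtain b where b: "q = pt b" using pt_nz P(2) by blast
  obtain u where u: "u \<noteq> (\<lambda>_. 0)" "x = pt u" using pt_nz P(3) by blast
  obtain v where v: "v \<noteq> (\<lambda>_. 0)" "y = pt v" using pt_nz P(4) by blast
  obtain w where w: "r = pt w" using pt_nz P(5) by blast
  have "u \<in> lspan [a, b]" "v \<in> lspan [a, b]" "w \<in> lspan [a, b]"
    using assms(6-8) a b u v w col_lspan by blast+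
  then have "w \<in> lspan [u, v]" using exch_vec u(1) v(1) assms(9) u(2) v(2) by blast
  then show ?thesis using u v w col_lspan by blast
qed

lemma P_exch2:
  assumes P: "p \<in> pg_points n" "q \<in> pg_points n" "r \<in> pg_points n"
    and "collinear_pts p q r" "r \<noteq> p"
  shows "collinear_pts p r q"
  using P_exch[OF P(1,2,1,3,2) P_refl1[OF P(1,2)] assms(4) P_refl2[OF P(1,2)] assms(5)[symmetric]] .

lemma P_exch3:
  assumes P: "p \<in> pg_points n" "q \<in> pg_points n" "r \<in> pg_points n"
    and "collinear_pts p q r" "r \<noteq> q"
  shows "collinear_pts q r p"
  using P_exch[OF P(1,2,2,3,1) P_refl2[OF P(1,2)] assms(4) P_refl1[OF P(1,2)] assms(5)[symmetric]] .

lemma hyp_sub: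
  assumes "H \<in> pg_hyperplanes n" "p \<in> pg_points n" "q \<in> pg_points n" "r \<in> pg_points n"
    "p \<subseteq> H" "q \<subseteq> H" "collinear_pts p q r"
  shows "r \<subseteq> H"
proof -
  obtain f where f: "f \<in> vecs n" "H = hyp n f" using hyp_rep[OF assms(1)] by blast
  obtain a where a: "a \<in> vecs n" "p = pt a" using pt_nz[OF assms(2)] by blast
  obtain b where b: "b \<in> vecs n" "q = pt b" using pt_nz[OF assms(3)] by blast
  obtain c where c: "c \<in> vecs n" "r = pt c" using pt_nz[OF assms(4)] by blast
  have fa: "ev n a f = 0" using pt_sub_hyp[OF a(1)] assms(5) a(2) f(2) by simp
  have fb: "ev n b f = 0" using pt_sub_hyp[OF b(1)] assms(6) b(2) f(2) by simp
  obtain \<alpha> \<beta> where "c = (\<lambda>i. \<alpha> * a i + \<beta> * b i)" using col_iff[of a b c] assms(7) a(2) b(2) c(2) by auto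
  then have "ev n c f = 0" using fa fb by (simp add: ev_lin)
  then show ?thesis using pt_sub_hyp[OF c(1)] c(2) f(2) by simp
qed

lemma pt_zero_vec: "pt (\<lambda>_. 0) = {(\<lambda>_. 0) :: nat \<Rightarrow> 'k::division_ring}"
  by (auto simp: pt_mem)

lemma rep_nz: assumes "p \<in> pg_points n" "p = pt a" shows "a \<noteq> (\<lambda>_. 0)"
proof
  assume a0: "a = (\<lambda>_. 0)"
  obtain a' where a': "a' \<noteq> (\<lambda>_. 0)" "p = pt a'" using pt_nz[OF assms(1)] by blast
  have "a' \<in> pt a" using pt_self[of a'] a'(2) assms(2) by simp
  then show False using a0 a'(1) by (simp add: pt_zero_vec)
qed

lemma rep_vecs: assumes "p \<in> pg_points n" "p = pt a" shows "a \<in> vecs n"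
proof -
  obtain a' where a': "a' \<in> vecs n" "p = pt a'" using pt_nz[OF assms(1)] by blast
  have "a \<in> pt a'" using pt_self[of a] a'(2) assms(2) by simp
  then obtain c where "a = (\<lambda>i. c * a' i)" using pt_mem by blast
  then show ?thesis using vecs_smul[OF a'(1)] by simp
qed

lemma indep_pts:
  assumes "p \<in> pg_points n" "q \<in> pg_points n" "p \<noteq> q" "p = pt a" "q = pt b"
    "(\<lambda>i. \<alpha> * a i + \<beta> * b i) = (\<lambda>_. 0)"
  shows "\<alpha> = 0 \<and> \<beta> = 0"
proof -
  have anz: "a \<noteq> (\<lambda>_. 0)" using rep_nz[OF assms(1,4)] .
  have bnz: "b \<noteq> (\<lambda>_. 0)" using rep_nz[OF assms(2,5)] .
  have "pt a \<noteq> pt b" using assms(3-5) by simp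
  then show ?thesis using indep2[OF bnz _ anz assms(6)] by simp
qed

lemma hyp_meet:
  assumes "H \<in> pg_hyperplanes n" "p \<in> pg_points n" "q \<in> pg_points n" "p \<noteq> q"
  shows "\<exists>r\<in>pg_points n. collinear_pts p q r \<and> r \<subseteq> H"
proof -
  obtain f where f: "f \<in> vecs n" "H = hyp n f" using hyp_rep assms(1) by blast
  obtain a where a: "a \<in> vecs n" "p = pt a" using pt_nz assms(2) by blast
  obtain b where b: "b \<in> vecs n" "q = pt b" using pt_nz assms(3) by blast
  show ?thesis
  proof (cases "ev n a f = 0")
    case True
    then have "p \<subseteq> H" using pt_sub_hyp a f by blast
    then show ?thesis using P_refl1 assms(2,3) by blast
  next
    case False
    define c where "c = (\<lambda>i. (- (ev n b f * inverse (ev n a f))) * a i + 1 * b i)"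
    have cv: "c \<in> vecs n" unfolding c_def using a b by (intro vecs_lin)
    have "c \<noteq> (\<lambda>_. 0)"
    proof
      assume "c = (\<lambda>_. 0)"
      then have "(1::'a) = 0" using indep_pts[OF assms(2-4) a(2) b(2)] unfolding c_def by blast
      then show False by simp
    qed
    then have cP: "pt c \<in> pg_points n" using cv pt_pt by blast
    have "ev n c f = 0" unfolding c_def ev_lin using False by (simp add: mult.assoc)
    then have "pt c \<subseteq> H" using pt_sub_hyp cv f by blast
    moreover have "collinear_pts p q (pt c)" unfolding a b c_def using col_iff by blast
    ultimately show ?thesis using cP by blast
  qed
qed

lemma not_in_lspan1:
  assumes "p \<in> pg_points n" "q \<in> pg_points n" "p \<noteq> q" "p = pt a" "q = pt b"
  shows "b \<notin> lspan [a]"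
proof
  assume "b \<in> lspan [a]"
  then obtain \<alpha> where "b = (\<lambda>i. \<alpha> * a i)" using lspan1 by blast
  then have "b \<in> pt a" using pt_mem by blast
  then have "pt b = pt a" using pt_eqI rep_nz[OF assms(2,5)] by blast
  then show False using assms by simp
qed

lemma hyp_of: "h \<in> vecs n \<Longrightarrow> h \<noteq> (\<lambda>_. 0) \<Longrightarrow> hyp n h \<in> pg_hyperplanes n"
  using pg_hyperplanes_iff by blast

lemma sep1:
  assumes "p \<in> pg_points n" "q \<in> pg_points n" "p \<noteq> q"
  shows "\<exists>H\<in>pg_hyperplanes n. p \<subseteq> H \<and> \<not> q \<subseteq> H"
proof -
  obtain a where a: "a \<in> vecs n" "p = pt a" using pt_nz[OF assms(1)] by blast
  obtain b where b: "b \<in> vecs n" "q = pt b" using pt_nz[OF assms(2)] by blast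
  have "b \<notin> lspan [a]" using not_in_lspan1[OF assms a(2) b(2)] .
  then obtain h where h: "h \<in> vecs n" "h \<noteq> (\<lambda>_. 0)" "ev n a h = 0" "ev n b h \<noteq> 0"
    using separation[of "[a]" n b] a(1) b(1) by auto
  have "p \<subseteq> hyp n h" using pt_sub_hyp[OF a(1)] a(2) h(3) by simp
  moreover have "\<not> q \<subseteq> hyp n h" using pt_sub_hyp[OF b(1)] b(2) h(4) by simp
  ultimately show ?thesis using hyp_of[OF h(1,2)] by blast
qed

lemma sep2:
  assumes "p \<in> pg_points n" "q \<in> pg_points n" "y \<in> pg_points n" "\<not> collinear_pts p q y"
  shows "\<exists>H\<in>pg_hyperplanes n. p \<subseteq> H \<and> q \<subseteq> H \<and> \<not> y \<subseteq> H"
proof -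
  obtain a where a: "a \<in> vecs n" "p = pt a" using pt_nz[OF assms(1)] by blast
  obtain b where b: "b \<in> vecs n" "q = pt b" using pt_nz[OF assms(2)] by blast
  obtain c where c: "c \<in> vecs n" "y = pt c" using pt_nz[OF assms(3)] by blast
  have "c \<notin> lspan [a, b]" using col_lspan[of a b c] assms(4) a(2) b(2) c(2) by simp
  then obtain h where h: "h \<in> vecs n" "h \<noteq> (\<lambda>_. 0)" "ev n a h = 0" "ev n b h = 0" "ev n c h \<noteq> 0"
    using separation[of "[a, b]" n c] a(1) b(1) c(1) by auto
  have "p \<subseteq> hyp n h" using pt_sub_hyp[OF a(1)] a(2) h(3) by simp
  moreover have "q \<subseteq> hyp n h" using pt_sub_hyp[OF b(1)] b(2) h(4) by simp
  moreover have "\<not> y \<subseteq> hyp n h" using pt_sub_hyp[OF c(1)] c(2) h(5) by simp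
  ultimately show ?thesis using hyp_of[OF h(1,2)] by blast
qed

lemma unitv_nz: "unitv k \<noteq> (\<lambda>_. (0::'k::division_ring))"
proof
  assume "unitv k = (\<lambda>_. (0::'k))"
  then have "unitv k k = (0::'k)" by (rule fun_cong)
  then show False by simp
qed

lemma off_line:
  assumes "n \<ge> 2" "p \<in> pg_points n" "q \<in> pg_points n"
  shows "\<exists>y\<in>pg_points n. \<not> collinear_pts p q y"
proof (rule ccontr)
  assume H: "\<not> (\<exists>y\<in>pg_points n. \<not> collinear_pts p q y)"
  obtain a where a: "p = pt a" using pt_nz[OF assms(2)] by blast
  obtain b where b: "q = pt b" using pt_nz[OF assms(3)] by blast
  have inl: "unitv k \<in> lspan [a, b]" if "k \<le> 2" for k
  proof -
    have kn: "k \<le> n" using that assms(1) by simp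
    have "pt (unitv k) \<in> pg_points n" using pt_pt[OF unitv_vecs[OF kn] unitv_nz] .
    then have "collinear_pts p q (pt (unitv k))" using H by blast
    then show ?thesis using col_lspan[of a b "unitv k"] a b by simp
  qed
  obtain l1 l2 l3 where l: "l1 \<noteq> 0 \<or> l2 \<noteq> 0 \<or> l3 \<noteq> 0"
    "(\<lambda>i. l1 * unitv 0 i + l2 * unitv 1 i + l3 * unitv 2 i) = (\<lambda>_. (0::'a))"
    using dep3[OF inl[of 0] inl[of 1] inl[of 2]] by auto
  have "l1 = 0" using fun_cong[OF l(2), of 0] by simp
  moreover have "l2 = 0" using fun_cong[OF l(2), of 1] by simp
  moreover have "l3 = 0" using fun_cong[OF l(2), of 2] by simp
  ultimately show False using l(1) by simp
qed

lemma through2: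
  assumes "n \<ge> 2" "p \<in> pg_points n" "q \<in> pg_points n"
  shows "\<exists>H\<in>pg_hyperplanes n. p \<subseteq> H \<and> q \<subseteq> H"
proof -
  obtain y where "y \<in> pg_points n" "\<not> collinear_pts p q y" using off_line[OF assms] by blast
  then show ?thesis using sep2[OF assms(2,3)] by blast
qed

lemma third_point:
  assumes "p \<in> pg_points n" "q \<in> pg_points n" "p \<noteq> q"
  shows "\<exists>r\<in>pg_points n. collinear_pts p q r \<and> r \<noteq> p \<and> r \<noteq> q"
proof -
  obtain a where a: "a \<in> vecs n" "p = pt a" using pt_nz[OF assms(1)] by blast
  obtain b where b: "b \<in> vecs n" "q = pt b" using pt_nz[OF assms(2)] by blast
  define c where "c = (\<lambda>i. 1 * a i + 1 * b i)"
  have cv: "c \<in> vecs n" unfolding c_def using a(1) b(1) by (rule vecs_lin)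
  have cnz: "c \<noteq> (\<lambda>_. 0)" using indep_pts[OF assms a(2) b(2), of 1 1] unfolding c_def by auto
  have cP: "pt c \<in> pg_points n" using pt_pt[OF cv cnz] .
  have col: "collinear_pts p q (pt c)" unfolding a(2) b(2) c_def using col_iff by blast
  have "pt c \<noteq> p"
  proof
    assume "pt c = p"
    then have "c \<in> pt a" using pt_self[of c] a(2) by simp
    then obtain d where "c = (\<lambda>i. d * a i)" using pt_mem by blast
    then have h: "a i + b i = d * a i" for i using fun_cong[of c _ i] unfolding c_def by simp
    have "(1 - d) * a i + 1 * b i = 0" for i
    proof -
      have "(1 - d) * a i + 1 * b i = (a i + b i) - d * a i" by (simp add: algebra_simps)
      also have "\<dots> = 0" using h[of i] by simp
      finally show ?thesis .
    qed
    then have "(\<lambda>i. (1 - d) * a i + 1 * b i) = (\<lambda>_. 0)" by simp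
    then show False using indep_pts[OF assms a(2) b(2), of "1 - d" 1] by simp
  qed
  moreover have "pt c \<noteq> q"
  proof
    assume "pt c = q"
    then have "c \<in> pt b" using pt_self[of c] b(2) by simp
    then obtain d where "c = (\<lambda>i. d * b i)" using pt_mem by blast
    then have h: "a i + b i = d * b i" for i using fun_cong[of c _ i] unfolding c_def by simp
    have "1 * a i + (1 - d) * b i = 0" for i
    proof -
      have "1 * a i + (1 - d) * b i = (a i + b i) - d * b i" by (simp add: algebra_simps)
      also have "\<dots> = 0" using h[of i] by simp
      finally show ?thesis .
    qed
    then have "(\<lambda>i. 1 * a i + (1 - d) * b i) = (\<lambda>_. 0)" by simp
    then show False using indep_pts[OF assms a(2) b(2), of 1 "1 - d"] by simp
  qed
  ultimately show ?thesis using cP col by blast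
qed

lemma ev_zero_fun: "ev n x (\<lambda>_. 0) = 0" by simp

lemma pencil_sub:
  assumes "H1 \<in> pg_hyperplanes n" "H2 \<in> pg_hyperplanes n" "B \<in> pg_hyperplanes n"
    "H1 \<noteq> H2" "H1 \<inter> H2 \<subseteq> B" "B \<noteq> H1"
  shows "H1 \<inter> B \<subseteq> H2"
proof -
  obtain f where f: "f \<in> vecs n" "f \<noteq> (\<lambda>_. 0)" "H1 = hyp n f" using hyp_rep[OF assms(1)] by blast
  obtain g where g: "g \<in> vecs n" "g \<noteq> (\<lambda>_. 0)" "H2 = hyp n g" using hyp_rep[OF assms(2)] by blast
  obtain b where b: "b \<in> vecs n" "b \<noteq> (\<lambda>_. 0)" "B = hyp n b" using hyp_rep[OF assms(3)] by blast
  have fg: "hyp n f \<noteq> hyp n g" using assms(4) f(3) g(3) by simp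
  obtain u v where uv: "u \<in> vecs n" "v \<in> vecs n" "ev n u f = 1" "ev n u g = 0" "ev n v f = 0" "ev n v g = 1"
    using decomp[OF f(1,2) g(1,2) fg] by blast
  have incl: "hyp n f \<inter> hyp n g \<subseteq> hyp n b" using assms(5) f(3) g(3) b(3) by simp
  have rep: "ev n x b = ev n x f * ev n u b + ev n x g * ev n v b" if "x \<in> vecs n" for x
    using decomp_rep[OF uv incl that] .
  have bv: "ev n v b \<noteq> 0"
  proof
    assume "ev n v b = 0"
    then have "hyp n f \<subseteq> hyp n b" using rep by auto
    then have "hyp n f = hyp n b" using hyp_incl_eq[OF f(1,2) b(1,2)] by simp
    then show False using assms(6) f(3) b(3) by simp
  qed
  show ?thesis
  proof
    fix x assume x: "x \<in> H1 \<inter> B"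
    then have xv: "x \<in> vecs n" "ev n x f = 0" "ev n x b = 0" using f(3) b(3) by auto
    then have "ev n x g * ev n v b = 0" using rep[OF xv(1)] by simp
    then have "ev n x g = 0" using bv by simp
    then show "x \<in> H2" using g(3) xv(1) by simp
  qed
qed

lemma pencil_ex:
  assumes "H1 \<in> pg_hyperplanes n" "H2 \<in> pg_hyperplanes n" "H1 \<noteq> H2" "x \<in> pg_points n"
  shows "\<exists>B\<in>pg_hyperplanes n. H1 \<inter> H2 \<subseteq> B \<and> x \<subseteq> B"
proof -
  obtain f where f: "f \<in> vecs n" "f \<noteq> (\<lambda>_. 0)" "H1 = hyp n f" using hyp_rep[OF assms(1)] by blast
  obtain g where g: "g \<in> vecs n" "g \<noteq> (\<lambda>_. 0)" "H2 = hyp n g" using hyp_rep[OF assms(2)] by blast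
  obtain x0 where x0: "x0 \<in> vecs n" "x = pt x0" using pt_nz[OF assms(4)] by blast
  show ?thesis
  proof (cases "ev n x0 f = 0")
    case True
    then have "x \<subseteq> H1" using pt_sub_hyp[OF x0(1)] x0(2) f(3) by simp
    then show ?thesis using assms(1) by blast
  next
    case False
    define c where "c = - (inverse (ev n x0 f) * ev n x0 g)"
    define b where "b = (\<lambda>i. g i * 1 + f i * c)"
    have evb: "ev n y b = ev n y g + ev n y f * c" for y unfolding b_def ev_rlin by simp
    have bv: "b \<in> vecs n" unfolding b_def using g(1) f(1) by (rule vecs_rlin)
    have bnz: "b \<noteq> (\<lambda>_. 0)"
    proof
      assume "b = (\<lambda>_. 0)"
      then have "ev n y g = ev n y f * (- c)" for y using evb[of y] by (simp add: eq_neg_iff_add_eq_0)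
      then have "hyp n f \<subseteq> hyp n g" by auto
      then have "hyp n f = hyp n g" using hyp_incl_eq[OF f(1,2) g(1,2)] by simp
      then show False using assms(3) f(3) g(3) by simp
    qed
    have "ev n x0 b = 0" unfolding evb c_def using False by (simp add: mult.assoc[symmetric])
    then have "x \<subseteq> hyp n b" using pt_sub_hyp[OF x0(1)] x0(2) by simp
    moreover have "H1 \<inter> H2 \<subseteq> hyp n b" using f(3) g(3) evb by auto
    ultimately show ?thesis using hyp_of[OF bv bnz] by blast
  qed
qed

lemma pencil_form:
  assumes uv: "u \<in> vecs n" "v \<in> vecs n" "ev n u f = 1" "ev n u g = 0" "ev n v f = 0" "ev n v g = 1"
    and a: "a \<in> vecs n" "a \<noteq> (\<lambda>_. 0)" "hyp n f \<inter> hyp n g \<subseteq> hyp n a"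
    and x0: "x0 \<in> vecs n" "ev n x0 a = 0" "ev n x0 f \<noteq> 0"
  shows "ev n v a \<noteq> 0 \<and> (\<forall>y\<in>vecs n. ev n y a = (ev n y f * (- (inverse (ev n x0 f) * ev n x0 g)) + ev n y g) * ev n v a)"
proof -
  have rep: "ev n y a = ev n y f * ev n u a + ev n y g * ev n v a" if "y \<in> vecs n" for y
    using decomp_rep[OF uv a(3) that] .
  have au: "ev n u a = - (inverse (ev n x0 f) * ev n x0 g) * ev n v a"
  proof -
    have "ev n x0 f * ev n u a + ev n x0 g * ev n v a = 0" using rep[OF x0(1)] x0(2) by simp
    then have "ev n x0 f * ev n u a = - (ev n x0 g * ev n v a)" by (simp add: eq_neg_iff_add_eq_0)
    then have "inverse (ev n x0 f) * (ev n x0 f * ev n u a) = inverse (ev n x0 f) * (- (ev n x0 g * ev n v a))" by simp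
    then show ?thesis using x0(3) by (simp add: mult.assoc[symmetric])
  qed
  have "ev n v a \<noteq> 0"
  proof
    assume "ev n v a = 0"
    then have "\<forall>y\<in>vecs n. ev n y a = 0" using rep au by simp
    then have "a = (\<lambda>_. 0)" using ev_zero_all[OF a(1)] by blast
    then show False using a(2) by simp
  qed
  moreover have "\<forall>y\<in>vecs n. ev n y a = (ev n y f * (- (inverse (ev n x0 f) * ev n x0 g)) + ev n y g) * ev n v a"
    using rep au by (simp add: distrib_right left_diff_distrib mult.assoc)
  ultimately show ?thesis by blast
qed

lemma pencil_uniq:
  assumes "H1 \<in> pg_hyperplanes n" "H2 \<in> pg_hyperplanes n" "A \<in> pg_hyperplanes n" "B \<in> pg_hyperplanes n"
    "H1 \<noteq> H2" "H1 \<inter> H2 \<subseteq> A" "H1 \<inter> H2 \<subseteq> B" "x \<in> pg_points n" "x \<subseteq> A" "x \<subseteq> B" "\<not> x \<subseteq> H1"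
  shows "A = B"
proof -
  obtain f where f: "f \<in> vecs n" "f \<noteq> (\<lambda>_. 0)" "H1 = hyp n f" using hyp_rep[OF assms(1)] by blast
  obtain g where g: "g \<in> vecs n" "g \<noteq> (\<lambda>_. 0)" "H2 = hyp n g" using hyp_rep[OF assms(2)] by blast
  obtain a where a: "a \<in> vecs n" "a \<noteq> (\<lambda>_. 0)" "A = hyp n a" using hyp_rep[OF assms(3)] by blast
  obtain b where b: "b \<in> vecs n" "b \<noteq> (\<lambda>_. 0)" "B = hyp n b" using hyp_rep[OF assms(4)] by blast
  obtain x0 where x0: "x0 \<in> vecs n" "x = pt x0" using pt_nz[OF assms(8)] by blast
  have fg: "hyp n f \<noteq> hyp n g" using assms(5) f(3) g(3) by simp
  obtain u v where uv: "u \<in> vecs n" "v \<in> vecs n" "ev n u f = 1" "ev n u g = 0" "ev n v f = 0" "ev n v g = 1"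
    using decomp[OF f(1,2) g(1,2) fg] by blast
  have xa: "ev n x0 a = 0" using pt_sub_hyp[OF x0(1)] x0(2) a(3) assms(9) by simp
  have xb: "ev n x0 b = 0" using pt_sub_hyp[OF x0(1)] x0(2) b(3) assms(10) by simp
  have xf: "ev n x0 f \<noteq> 0" using pt_sub_hyp[OF x0(1)] x0(2) f(3) assms(11) by simp
  have ia: "hyp n f \<inter> hyp n g \<subseteq> hyp n a" using assms(6) f(3) g(3) a(3) by simp
  have ib: "hyp n f \<inter> hyp n g \<subseteq> hyp n b" using assms(7) f(3) g(3) b(3) by simp
  define k where "k = - (inverse (ev n x0 f) * ev n x0 g)"
  have Fa: "ev n v a \<noteq> 0" "\<forall>y\<in>vecs n. ev n y a = (ev n y f * k + ev n y g) * ev n v a"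
    using pencil_form[OF uv a(1,2) ia x0(1) xa xf] unfolding k_def by blast+
  have Fb: "ev n v b \<noteq> 0" "\<forall>y\<in>vecs n. ev n y b = (ev n y f * k + ev n y g) * ev n v b"
    using pencil_form[OF uv b(1,2) ib x0(1) xb xf] unfolding k_def by blast+
  have "hyp n a = hyp n b"
  proof (intro equalityI subsetI)
    fix y assume y: "y \<in> hyp n a"
    then have "(ev n y f * k + ev n y g) * ev n v a = 0" using Fa(2) by auto
    then have "ev n y f * k + ev n y g = 0" using Fa(1) by simp
    then show "y \<in> hyp n b" using Fb(2) y by auto
  next
    fix y assume y: "y \<in> hyp n b"
    then have "(ev n y f * k + ev n y g) * ev n v b = 0" using Fb(2) by auto
    then have "ev n y f * k + ev n y g = 0" using Fb(1) by simp
    then show "y \<in> hyp n a" using Fa(2) y by auto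
  qed
  then show ?thesis using a(3) b(3) by simp
qed

lemma share_point:
  assumes "n \<ge> 2" "H1 \<in> pg_hyperplanes n" "H2 \<in> pg_hyperplanes n"
  shows "\<exists>p\<in>pg_points n. p \<subseteq> H1 \<and> p \<subseteq> H2"
proof -
  obtain f where f: "f \<in> vecs n" "H1 = hyp n f" using hyp_rep[OF assms(2)] by blast
  obtain g where g: "g \<in> vecs n" "H2 = hyp n g" using hyp_rep[OF assms(3)] by blast
  define h where "h = (\<lambda>(j::nat) (i::nat). if j = 0 then f i else g i)"
  have "card {..n} > 2" using assms(1) by simp
  then obtain x where x: "\<forall>i. i \<notin> {..n} \<longrightarrow> x i = 0" "\<exists>i\<in>{..n}. x i \<noteq> 0"
     "\<forall>j<2. (\<Sum>i\<in>{..n}. x i * h j i) = 0"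
    using homog[of "{..n}" 2 h] by auto
  have xv: "x \<in> vecs n" using x(1) by (auto simp: vecs_def)
  have xnz: "x \<noteq> (\<lambda>_. 0)" using x(2) by auto
  have "ev n x f = 0" using x(3)[rule_format, of 0] by (simp add: h_def)
  moreover have "ev n x g = 0" using x(3)[rule_format, of 1] by (simp add: h_def)
  ultimately have "pt x \<subseteq> H1" "pt x \<subseteq> H2" using pt_sub_hyp[OF xv] f(2) g(2) by simp_all
  then show ?thesis using pt_pt[OF xv xnz] by blast
qed

lemma sum4: "(\<Sum>i\<in>{0,1,2,3::nat}. f i) = f 0 + f 1 + f 2 + f 3"
  by (simp add: add.assoc)

lemma unique2:
  assumes "H1 \<in> pg_hyperplanes 2" "H2 \<in> pg_hyperplanes 2" "p \<in> pg_points 2" "q \<in> pg_points 2"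
    "p \<noteq> q" "p \<subseteq> H1" "q \<subseteq> H1" "p \<subseteq> H2" "q \<subseteq> H2"
  shows "H1 = H2"
proof (rule ccontr)
  assume ne: "H1 \<noteq> H2"
  obtain f where f: "f \<in> vecs 2" "f \<noteq> (\<lambda>_. 0)" "H1 = hyp 2 f" using hyp_rep[OF assms(1)] by blast
  obtain g where g: "g \<in> vecs 2" "g \<noteq> (\<lambda>_. 0)" "H2 = hyp 2 g" using hyp_rep[OF assms(2)] by blast
  obtain a where a: "a \<in> vecs 2" "p = pt a" using pt_nz[OF assms(3)] by blast
  obtain b where b: "b \<in> vecs 2" "q = pt b" using pt_nz[OF assms(4)] by blast
  have fg: "hyp 2 f \<noteq> hyp 2 g" using ne f(3) g(3) by simp
  obtain u v where uv: "u \<in> vecs 2" "v \<in> vecs 2" "ev 2 u f = 1" "ev 2 u g = 0" "ev 2 v f = 0" "ev 2 v g = 1"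
    using decomp[OF f(1,2) g(1,2) fg] by blast
  have af: "ev 2 a f = 0" using pt_sub_hyp[OF a(1)] a(2) f(3) assms(6) by simp
  have bf: "ev 2 b f = 0" using pt_sub_hyp[OF b(1)] b(2) f(3) assms(7) by simp
  have ag: "ev 2 a g = 0" using pt_sub_hyp[OF a(1)] a(2) g(3) assms(8) by simp
  have bg: "ev 2 b g = 0" using pt_sub_hyp[OF b(1)] b(2) g(3) assms(9) by simp
  define w where "w = (\<lambda>i::nat. if i = 0 then a else if i = 1 then b else if i = 2 then u else v)"
  have "\<forall>i\<in>{0,1,2,3}. w i \<in> vecs 2" using a(1) b(1) uv(1,2) by (auto simp: w_def)
  then obtain l where l: "\<exists>i\<in>{0,1,2,3}. l i \<noteq> 0" "\<forall>j. (\<Sum>i\<in>{0,1,2,3}. l i * w i j) = 0"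
    using dep_gen[of "{0,1,2,3::nat}" 2 w] by auto
  have z: "(\<lambda>j. \<Sum>i\<in>{0,1,2,3}. l i * w i j) = (\<lambda>_. 0)" using l(2) by auto
  have "ev 2 (\<lambda>j. \<Sum>i\<in>{0,1,2,3}. l i * w i j) f = 0" by (simp only: l(2) mult_zero_left sum.neutral_const)
  then have "(\<Sum>i\<in>{0,1,2,3}. l i * ev 2 (w i) f) = 0" by (simp only: ev_sumcomb)
  then have l2: "l 2 = 0" unfolding sum4 using af bf uv by (simp add: w_def)
  have "ev 2 (\<lambda>j. \<Sum>i\<in>{0,1,2,3}. l i * w i j) g = 0" by (simp only: l(2) mult_zero_left sum.neutral_const)
  then have "(\<Sum>i\<in>{0,1,2,3}. l i * ev 2 (w i) g) = 0" by (simp only: ev_sumcomb)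
  then have l3: "l 3 = 0" unfolding sum4 using ag bg uv by (simp add: w_def)
  have "(\<lambda>j. l 0 * a j + l 1 * b j) = (\<lambda>_. 0)"
  proof
    fix j
    have "(\<Sum>i\<in>{0,1,2,3}. l i * w i j) = 0" using l(2) by blast
    then show "l 0 * a j + l 1 * b j = 0" unfolding sum4 using l2 l3 by (simp add: w_def)
  qed
  then have "l 0 = 0 \<and> l 1 = 0" using indep_pts[OF assms(3,4,5) a(2) b(2)] by blast
  then show False using l(1) l2 l3 by auto
qed

lemma off_line_in_hyp:
  assumes "n \<ge> 3" "H \<in> pg_hyperplanes n" "p \<in> pg_points n" "q \<in> pg_points n"
  shows "\<exists>t\<in>pg_points n. t \<subseteq> H \<and> \<not> collinear_pts p q t"
proof (rule ccontr)
  assume C: "\<not> (\<exists>t\<in>pg_points n. t \<subseteq> H \<and> \<not> collinear_pts p q t)"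
  obtain f where f: "f \<in> vecs n" "f \<noteq> (\<lambda>_. 0)" "H = hyp n f" using hyp_rep[OF assms(2)] by blast
  obtain a where a: "p = pt a" using pt_nz[OF assms(3)] by blast
  obtain b where b: "q = pt b" using pt_nz[OF assms(4)] by blast
  obtain i0 where i0: "i0 \<le> n" "f i0 \<noteq> 0" using nz_index[OF f(1,2)] by blast
  define xk where "xk = (\<lambda>k. (\<lambda>j. 1 * unitv k j + (- (f k * inverse (f i0))) * unitv i0 j))"
  have xk_in: "xk k \<in> lspan [a, b]" if "k \<le> n" "k \<noteq> i0" for k
  proof -
    have v: "xk k \<in> vecs n" unfolding xk_def using unitv_vecs[OF that(1)] unitv_vecs[OF i0(1)] by (rule vecs_lin)
    have nz: "xk k \<noteq> (\<lambda>_. 0)"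
    proof
      assume "xk k = (\<lambda>_. 0)"
      then have "xk k k = 0" by simp
      then show False using that(2) by (simp add: xk_def)
    qed
    have "ev n (xk k) f = 0" unfolding xk_def ev_lin ev_unitv[OF that(1)] ev_unitv[OF i0(1)]
      using i0(2) by (simp add: mult.assoc)
    then have "pt (xk k) \<subseteq> H" using pt_sub_hyp[OF v] f(3) by simp
    then have "collinear_pts p q (pt (xk k))" using C pt_pt[OF v nz] by blast
    then show ?thesis using col_lspan[of a b "xk k"] a b by simp
  qed
  define k1 where "k1 = (if i0 = 0 then 3 else 0::nat)"
  define k2 where "k2 = (if i0 = 1 then 3 else 1::nat)"
  define k3 where "k3 = (if i0 = 2 then 3 else 2::nat)"
  have ks: "k1 \<le> n" "k2 \<le> n" "k3 \<le> n" "k1 \<noteq> i0" "k2 \<noteq> i0" "k3 \<noteq> i0" "k1 \<noteq> k2" "k1 \<noteq> k3" "k2 \<noteq> k3"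
    using assms(1) by (auto simp: k1_def k2_def k3_def)
  obtain l1 l2 l3 where l: "l1 \<noteq> 0 \<or> l2 \<noteq> 0 \<or> l3 \<noteq> 0"
    "(\<lambda>i. l1 * xk k1 i + l2 * xk k2 i + l3 * xk k3 i) = (\<lambda>_. 0)"
    using dep3[OF xk_in[OF ks(1,4)] xk_in[OF ks(2,5)] xk_in[OF ks(3,6)]] by blast
  have "l1 = 0" using fun_cong[OF l(2), of k1] ks by (simp add: xk_def)
  moreover have "l2 = 0" using fun_cong[OF l(2), of k2] ks by (simp add: xk_def)
  moreover have "l3 = 0" using fun_cong[OF l(2), of k3] ks by (simp add: xk_def)
  ultimately show False using l(1) by simp
qed

lemma ring_swap: "(x::'a::ring) + y = z + w \<Longrightarrow> x + - z = w + - y"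
  by (simp add: algebra_simps)

lemma meet_lines:
  assumes P: "q \<in> pg_points n" "r \<in> pg_points n" "q' \<in> pg_points n" "r' \<in> pg_points n" "s \<in> pg_points n"
    and "q \<noteq> q'" "s \<noteq> r" "collinear_pts q r s" "collinear_pts q' r' s"
  shows "\<exists>x\<in>pg_points n. collinear_pts q q' x \<and> collinear_pts r r' x"
proof -
  obtain a where a: "a \<in> vecs n" "q = pt a" using pt_nz[OF P(1)] by blast
  obtain b where b: "b \<in> vecs n" "r = pt b" using pt_nz[OF P(2)] by blast
  obtain a' where a': "a' \<in> vecs n" "q' = pt a'" using pt_nz[OF P(3)] by blast
  obtain b' where b': "b' \<in> vecs n" "r' = pt b'" using pt_nz[OF P(4)] by blast
  obtain c where c: "c \<in> vecs n" "s = pt c" using pt_nz[OF P(5)] by blast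
  obtain \<alpha> \<beta> where c1: "c = (\<lambda>i. \<alpha> * a i + \<beta> * b i)" using col_iff[of a b c] assms(8) a(2) b(2) c(2) by auto
  obtain \<gamma> \<delta> where c2: "c = (\<lambda>i. \<gamma> * a' i + \<delta> * b' i)" using col_iff[of a' b' c] assms(9) a'(2) b'(2) c(2) by auto
  define w where "w = (\<lambda>i. \<alpha> * a i + (- \<gamma>) * a' i)"
  have w2: "w = (\<lambda>i. (- \<beta>) * b i + \<delta> * b' i)"
  proof
    fix i
    have "\<alpha> * a i + \<beta> * b i = \<gamma> * a' i + \<delta> * b' i" using fun_cong[OF c1, of i] fun_cong[OF c2, of i] by simp
    then have "\<alpha> * a i + - (\<gamma> * a' i) = \<delta> * b' i + - (\<beta> * b i)" by (rule ring_swap)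
    then show "w i = (- \<beta>) * b i + \<delta> * b' i" unfolding w_def by (simp add: add.commute)
  qed
  show ?thesis
  proof (cases "w = (\<lambda>_. 0)")
    case False
    have wv: "w \<in> vecs n" unfolding w_def using a(1) a'(1) by (rule vecs_lin)
    have "collinear_pts q q' (pt w)" unfolding a(2) a'(2) w_def using col_iff by blast
    moreover have "collinear_pts r r' (pt w)" unfolding b(2) b'(2) w2 using col_iff by blast
    ultimately show ?thesis using pt_pt[OF wv False] by blast
  next
    case True
    then have "\<alpha> = 0 \<and> - \<gamma> = 0" using indep_pts[OF P(1,3) assms(6) a(2) a'(2)] unfolding w_def by blast
    then have "c = (\<lambda>i. \<beta> * b i)" using c1 by simp
    then have "c \<in> pt b" using pt_mem by blast
    then have "pt c = pt b" using pt_eqI rep_nz[OF P(5) c(2)] by blast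
    then show ?thesis using assms(7) b(2) c(2) by simp
  qed
qed

lemma triangle:
  assumes K: "K \<in> pg_hyperplanes n"
    and P: "c1 \<in> pg_points n" "c2 \<in> pg_points n" "c3 \<in> pg_points n" "q \<in> pg_points n" "r \<in> pg_points n" "t \<in> pg_points n"
    and cols: "collinear_pts c1 c2 q" "collinear_pts c1 c3 r" "collinear_pts c2 c3 t"
    and inK: "q \<subseteq> K" "r \<subseteq> K" "t \<subseteq> K" "\<not> c1 \<subseteq> K"
  shows "collinear_pts q r t"
proof -
  obtain f where f: "f \<in> vecs n" "K = hyp n f" using hyp_rep[OF K] by blast
  obtain x1 where x1: "x1 \<in> vecs n" "c1 = pt x1" using pt_nz[OF P(1)] by blast
  obtain x2 where x2: "x2 \<in> vecs n" "c2 = pt x2" using pt_nz[OF P(2)] by blast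
  obtain x3 where x3: "x3 \<in> vecs n" "c3 = pt x3" using pt_nz[OF P(3)] by blast
  obtain qv where qv: "qv \<in> vecs n" "q = pt qv" using pt_nz[OF P(4)] by blast
  obtain rv where rv: "rv \<in> vecs n" "r = pt rv" using pt_nz[OF P(5)] by blast
  obtain tv where tv: "tv \<in> vecs n" "t = pt tv" using pt_nz[OF P(6)] by blast
  obtain a1 a2 where q1: "qv = (\<lambda>i. a1 * x1 i + a2 * x2 i)" using col_iff[of x1 x2 qv] cols(1) x1 x2 qv by auto
  obtain b1 b3 where r1: "rv = (\<lambda>i. b1 * x1 i + b3 * x3 i)" using col_iff[of x1 x3 rv] cols(2) x1 x3 rv by auto
  obtain g2 g3 where t1: "tv = (\<lambda>i. g2 * x2 i + g3 * x3 i)" using col_iff[of x2 x3 tv] cols(3) x2 x3 tv by auto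
  define f1 where "f1 = ev n x1 f"
  define f2 where "f2 = ev n x2 f"
  define f3 where "f3 = ev n x3 f"
  have f1nz: "f1 \<noteq> 0" using pt_sub_hyp[OF x1(1)] x1(2) f(2) inK(4) f1_def by simp
  have eq: "a1 * f1 + a2 * f2 = 0" using pt_sub_hyp[OF qv(1)] qv(2) f(2) inK(1) unfolding q1 ev_lin f1_def f2_def by simp
  have er: "b1 * f1 + b3 * f3 = 0" using pt_sub_hyp[OF rv(1)] rv(2) f(2) inK(2) unfolding r1 ev_lin f1_def f3_def by simp
  have et: "g2 * f2 + g3 * f3 = 0" using pt_sub_hyp[OF tv(1)] tv(2) f(2) inK(3) unfolding t1 ev_lin f2_def f3_def by simp
  have qnz: "qv \<noteq> (\<lambda>_. 0)" using rep_nz[OF P(4) qv(2)] .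
  have rnz: "rv \<noteq> (\<lambda>_. 0)" using rep_nz[OF P(5) rv(2)] .
  have a2nz: "a2 \<noteq> 0"
  proof
    assume "a2 = 0"
    then have "a1 = 0" using eq f1nz by simp
    then show False using qnz q1 \<open>a2 = 0\<close> by simp
  qed
  have b3nz: "b3 \<noteq> 0"
  proof
    assume "b3 = 0"
    then have "b1 = 0" using er f1nz by simp
    then show False using rnz r1 \<open>b3 = 0\<close> by simp
  qed
  define k where "k = g2 * inverse a2 * a1 + g3 * inverse b3 * b1"
  have "k * f1 = 0"
  proof -
    have A: "a1 * f1 = - (a2 * f2)" using eq by (simp add: eq_neg_iff_add_eq_0)
    have B: "b1 * f1 = - (b3 * f3)" using er by (simp add: eq_neg_iff_add_eq_0)
    have "k * f1 = g2 * inverse a2 * (a1 * f1) + g3 * inverse b3 * (b1 * f1)"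
      by (simp add: k_def distrib_right mult.assoc)
    also have "\<dots> = - (g2 * (inverse a2 * a2) * f2) - g3 * (inverse b3 * b3) * f3"
      unfolding A B by (simp add: mult.assoc)
    also have "\<dots> = - (g2 * f2 + g3 * f3)" using a2nz b3nz by simp
    finally show ?thesis using et by simp
  qed
  then have k0: "k = 0" using f1nz by simp
  have "tv = (\<lambda>i. (g2 * inverse a2) * qv i + (g3 * inverse b3) * rv i)"
  proof
    fix i
    have "(g2 * inverse a2) * qv i + (g3 * inverse b3) * rv i
        = k * x1 i + g2 * (inverse a2 * a2) * x2 i + g3 * (inverse b3 * b3) * x3 i"
      unfolding q1 r1 k_def by (simp add: algebra_simps)
    also have "\<dots> = tv i" using k0 a2nz b3nz t1 by simp
    finally show "tv i = (g2 * inverse a2) * qv i + (g3 * inverse b3) * rv i" by simp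
  qed
  then show ?thesis using col_iff[of qv rv tv] qv(2) rv(2) tv(2) by blast
qed

context
  fixes n :: nat and \<theta> :: "(nat \<Rightarrow> 'k::division_ring) set \<Rightarrow> (nat \<Rightarrow> 'k) set"
  assumes coll: "collineation n \<theta>"
begin

lemma th_P: "p \<in> pg_points n \<Longrightarrow> \<theta> p \<in> pg_points n"
  using coll unfolding collineation_def bij_betw_def by blast

lemma th_inj: "p \<in> pg_points n \<Longrightarrow> q \<in> pg_points n \<Longrightarrow> \<theta> p = \<theta> q \<Longrightarrow> p = q"
  using coll unfolding collineation_def bij_betw_def inj_on_def by blast

lemma th_surj: "x \<in> pg_points n \<Longrightarrow> \<exists>p\<in>pg_points n. \<theta> p = x"
  using coll unfolding collineation_def bij_betw_def by (metis imageE)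

lemma th_col: "p \<in> pg_points n \<Longrightarrow> q \<in> pg_points n \<Longrightarrow> r \<in> pg_points n \<Longrightarrow>
    collinear_pts (\<theta> p) (\<theta> q) (\<theta> r) \<longleftrightarrow> collinear_pts p q r"
  using coll unfolding collineation_def by blast

lemma pt_sub_vecs: "p \<in> pg_points n \<Longrightarrow> p \<subseteq> vecs n"
proof
  fix x assume p: "p \<in> pg_points n" and x: "x \<in> p"
  obtain a where a: "a \<in> vecs n" "p = pt a" using pt_nz[OF p] by blast
  then obtain c where "x = (\<lambda>i. c * a i)" using x pt_mem by blast
  then show "x \<in> vecs n" using vecs_smul[OF a(1)] by simp
qed

lemma hi_mem:
  assumes "x \<in> pg_points n"
  shows "x \<subseteq> hyp_image n \<theta> H \<longleftrightarrow> (\<exists>p\<in>pg_points n. p \<subseteq> H \<and> \<theta> p = x)"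
proof
  assume "\<exists>p\<in>pg_points n. p \<subseteq> H \<and> \<theta> p = x"
  then show "x \<subseteq> hyp_image n \<theta> H" unfolding hyp_image_def by blast
next
  assume sub: "x \<subseteq> hyp_image n \<theta> H"
  obtain v where v: "v \<noteq> (\<lambda>_. 0)" "x = pt v" using pt_nz[OF assms] by blast
  have "v \<in> hyp_image n \<theta> H" using sub v(2) pt_self by blast
  then obtain p where p: "p \<in> pg_points n" "p \<subseteq> H" "v \<in> \<theta> p" unfolding hyp_image_def by blast
  obtain w where w: "\<theta> p = pt w" using pt_nz[OF th_P[OF p(1)]] by blast
  have "pt v = pt w" using pt_eqI[OF _ v(1)] p(3) w by simp
  then show "\<exists>p\<in>pg_points n. p \<subseteq> H \<and> \<theta> p = x" using p w v(2) by auto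
qed

lemma hi_pt: "p \<in> pg_points n \<Longrightarrow> p \<subseteq> H \<Longrightarrow> \<theta> p \<subseteq> hyp_image n \<theta> H"
  using hi_mem th_P by blast

lemma hi_vecs: "hyp_image n \<theta> H \<subseteq> vecs n"
  unfolding hyp_image_def using th_P pt_sub_vecs by blast

lemma hi_closed:
  assumes H: "H \<in> pg_hyperplanes n" and z0: "(\<lambda>_. 0) \<in> hyp_image n \<theta> H"
    and x: "x \<in> hyp_image n \<theta> H" and y: "y \<in> hyp_image n \<theta> H"
  shows "(\<lambda>i. \<alpha> * x i + \<beta> * y i) \<in> hyp_image n \<theta> H"
proof (cases "(\<lambda>i. \<alpha> * x i + \<beta> * y i) = (\<lambda>_. 0)")
  case True then show ?thesis using z0 by simp
next
  case False
  define W where "W = hyp_image n \<theta> H"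
  obtain p1 where p1: "p1 \<in> pg_points n" "p1 \<subseteq> H" "x \<in> \<theta> p1" using x unfolding hyp_image_def by blast
  obtain p2 where p2: "p2 \<in> pg_points n" "p2 \<subseteq> H" "y \<in> \<theta> p2" using y unfolding hyp_image_def by blast
  obtain x1 where x1: "\<theta> p1 = pt x1" using pt_nz[OF th_P[OF p1(1)]] by blast
  obtain y1 where y1: "\<theta> p2 = pt y1" using pt_nz[OF th_P[OF p2(1)]] by blast
  obtain c1 where c1: "x = (\<lambda>i. c1 * x1 i)" using p1(3) x1 pt_mem by blast
  obtain c2 where c2: "y = (\<lambda>i. c2 * y1 i)" using p2(3) y1 pt_mem by blast
  define z where "z = (\<lambda>i. \<alpha> * x i + \<beta> * y i)"
  have zeq: "z = (\<lambda>i. (\<alpha> * c1) * x1 i + (\<beta> * c2) * y1 i)" unfolding z_def c1 c2 by (simp add: mult.assoc)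
  have zv: "z \<in> vecs n" using hi_vecs x y unfolding z_def by (intro vecs_lin) auto
  have zP: "pt z \<in> pg_points n" using pt_pt[OF zv] False z_def by simp
  have col: "collinear_pts (\<theta> p1) (\<theta> p2) (pt z)" unfolding x1 y1 zeq using col_iff by blast
  obtain p3 where p3: "p3 \<in> pg_points n" "\<theta> p3 = pt z" using th_surj[OF zP] by blast
  have "collinear_pts p1 p2 p3" using th_col[OF p1(1) p2(1) p3(1)] col p3(2) by simp
  then have "p3 \<subseteq> H" using hyp_sub[OF H p1(1) p2(1) p3(1) p1(2) p2(2)] by blast
  then have "pt z \<subseteq> hyp_image n \<theta> H" using hi_pt[OF p3(1)] p3(2) by simp
  then show ?thesis using pt_self[of z] z_def by blast
qed

end

lemma W_sum:
  fixes W :: "(nat \<Rightarrow> 'k::division_ring) set"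
  assumes z0: "(\<lambda>_. 0) \<in> W" and cl: "\<forall>x\<in>W. \<forall>y\<in>W. \<forall>a b. (\<lambda>i. a * x i + b * y i) \<in> W"
    and F: "finite F" and w: "\<forall>i\<in>F. w i \<in> W"
  shows "(\<lambda>j. \<Sum>i\<in>F. c i * w i j) \<in> W"
  using F w
proof (induction F rule: finite_induct)
  case empty then show ?case using z0 by simp
next
  case (insert a F)
  then have IH: "(\<lambda>j. \<Sum>i\<in>F. c i * w i j) \<in> W" and wa: "w a \<in> W" by auto
  have "(\<lambda>j. c a * w a j + 1 * (\<Sum>i\<in>F. c i * w i j)) \<in> W"
    using spec[OF spec[OF bspec[OF bspec[OF cl wa] IH], of "c a"], of 1] by simp
  then show ?case using insert(1,2) by simp
qed

context
  fixes n :: nat and \<theta> :: "(nat \<Rightarrow> 'k::division_ring) set \<Rightarrow> (nat \<Rightarrow> 'k) set"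
  assumes coll: "collineation n \<theta>" and n2: "n \<ge> 2"
begin

lemma hi_hyp:
  assumes H: "H \<in> pg_hyperplanes n"
  shows "hyp_image n \<theta> H \<in> pg_hyperplanes n"
proof -
  define W where "W = hyp_image n \<theta> H"
  obtain f where f: "f \<in> vecs n" "f \<noteq> (\<lambda>_. 0)" "H = hyp n f" using hyp_rep[OF H] by blast
  obtain p0 where p0: "p0 \<in> pg_points n" "p0 \<subseteq> H" using share_point[OF n2 H H] by blast
  have z0: "(\<lambda>_. 0) \<in> W"
  proof -
    obtain w where w: "\<theta> p0 = pt w" using pt_nz[OF th_P[OF coll p0(1)]] by blast
    have "(\<lambda>_. 0) \<in> \<theta> p0" using pt_zero[of w] w by simp
    then show ?thesis using hi_pt[OF coll p0] W_def by blast
  qed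
  have cl: "(\<lambda>i. a * x i + b * y i) \<in> W" if "x \<in> W" "y \<in> W" for x y a b
    using hi_closed[OF coll H] z0 that unfolding W_def by blast
  have Wv: "W \<subseteq> vecs n" using hi_vecs[OF coll] W_def by blast
  obtain i0 where i0: "i0 \<le> n" "f i0 \<noteq> 0" using nz_index[OF f(1,2)] by blast
  define p where "p = pt (unitv i0 :: nat \<Rightarrow> 'k)"
  have pP: "p \<in> pg_points n" unfolding p_def using pt_pt[OF unitv_vecs[OF i0(1)] unitv_nz] .
  have e: "ev n (unitv i0) f = f i0" by (rule ev_unitv[OF i0(1)])
  have e2: "pt (unitv i0) \<subseteq> hyp n f \<longleftrightarrow> ev n (unitv i0) f = 0" by (rule pt_sub_hyp[OF unitv_vecs[OF i0(1)]])
  have pH: "\<not> p \<subseteq> H" unfolding p_def f(3) e2 e using i0(2) by simp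
  obtain x0 where x0: "x0 \<in> vecs n" "\<theta> p = pt x0" using pt_nz[OF th_P[OF coll pP]] by blast
  have x0nz: "x0 \<noteq> (\<lambda>_. 0)" using rep_nz[OF th_P[OF coll pP] x0(2)] .
  have x0W: "x0 \<notin> W"
  proof
    assume "x0 \<in> W"
    have "pt x0 \<subseteq> W"
    proof
      fix z assume "z \<in> pt x0"
      then obtain c where "z = (\<lambda>i. c * x0 i)" using pt_mem by blast
      then have "z = (\<lambda>i. c * x0 i + 0 * x0 i)" by simp
      then show "z \<in> W" using cl[OF \<open>x0 \<in> W\<close> \<open>x0 \<in> W\<close>, of c 0] by simp
    qed
    then obtain p' where p': "p' \<in> pg_points n" "p' \<subseteq> H" "\<theta> p' = \<theta> p"
      using hi_mem[OF coll th_P[OF coll pP]] x0(2) W_def by auto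
    then have "p' = p" using th_inj[OF coll p'(1) pP] by simp
    then show False using p'(2) pH by simp
  qed
  have dec: "\<exists>l. (\<lambda>j. v j + (- l) * x0 j) \<in> W" if v: "v \<in> vecs n" for v
  proof (cases "v = (\<lambda>_. 0)")
    case True
    have "(\<lambda>j. v j + (- 0) * x0 j) \<in> W" using True z0 by simp
    then show ?thesis by blast
  next
    case False
    have VP: "pt v \<in> pg_points n" using pt_pt[OF v False] .
    show ?thesis
    proof (cases "pt v = \<theta> p")
      case True
      then have "v \<in> pt x0" using pt_self[of v] x0(2) by simp
      then obtain c where c: "v = (\<lambda>i. c * x0 i)" using pt_mem by blast
      have "(\<lambda>j. v j + (- c) * x0 j) = (\<lambda>_. 0)" unfolding c by simp
      then have "(\<lambda>j. v j + (- c) * x0 j) \<in> W" using z0 by simp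
      then show ?thesis by blast
    next
      case False
      obtain pv where pv: "pv \<in> pg_points n" "\<theta> pv = pt v" using th_surj[OF coll VP] by blast
      have ppv: "p \<noteq> pv" using False pv(2) by auto
      obtain r where r: "r \<in> pg_points n" "collinear_pts p pv r" "r \<subseteq> H"
        using hyp_meet[OF H pP pv(1) ppv] by blast
      have "collinear_pts (\<theta> p) (\<theta> pv) (\<theta> r)" using th_col[OF coll pP pv(1) r(1)] r(2) by simp
      moreover obtain z where z: "z \<in> vecs n" "\<theta> r = pt z" using pt_nz[OF th_P[OF coll r(1)]] by blast
      ultimately obtain \<alpha> \<beta> where zab: "z = (\<lambda>i. \<alpha> * x0 i + \<beta> * v i)"
        using col_iff[of x0 v z] x0(2) pv(2) by auto
      have znz: "z \<noteq> (\<lambda>_. 0)" using rep_nz[OF th_P[OF coll r(1)] z(2)] .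
      have zW: "z \<in> W" using hi_pt[OF coll r(1) r(3)] z(2) pt_self[of z] W_def by blast
      have bnz: "\<beta> \<noteq> 0"
      proof
        assume "\<beta> = 0"
        then have "z \<in> pt x0" using zab pt_mem by auto
        then have "pt z = pt x0" using pt_eqI znz by blast
        then have "\<theta> r = \<theta> p" using z(2) x0(2) by simp
        then have "r = p" using th_inj[OF coll r(1) pP] by simp
        then show False using r(3) pH by simp
      qed
      have "(\<lambda>i. inverse \<beta> * z i + 0 * z i) \<in> W" using cl[OF zW zW] .
      moreover have "(\<lambda>i. inverse \<beta> * z i + 0 * z i) = (\<lambda>j. v j + (- (- (inverse \<beta> * \<alpha>))) * x0 j)"
      proof
        fix j
        have "inverse \<beta> * z j = inverse \<beta> * \<alpha> * x0 j + (inverse \<beta> * \<beta>) * v j"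
          unfolding zab by (simp add: distrib_left mult.assoc)
        then show "inverse \<beta> * z j + 0 * z j = v j + (- (- (inverse \<beta> * \<alpha>))) * x0 j"
          using bnz by (simp add: add.commute)
      qed
      ultimately have "(\<lambda>j. v j + (- (- (inverse \<beta> * \<alpha>))) * x0 j) \<in> W" by simp
      then show ?thesis by blast
    qed
  qed
  have uniq: "a = b" if "(\<lambda>j. v j + (- a) * x0 j) \<in> W" "(\<lambda>j. v j + (- b) * x0 j) \<in> W" for v a b
  proof (rule ccontr)
    assume ab: "a \<noteq> b"
    have "(\<lambda>i. 1 * (v i + (- a) * x0 i) + (- 1) * (v i + (- b) * x0 i)) \<in> W" using cl[OF that] .
    moreover have "(\<lambda>i. 1 * (v i + (- a) * x0 i) + (- 1) * (v i + (- b) * x0 i)) = (\<lambda>i. (b - a) * x0 i)"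
      by (simp add: algebra_simps)
    ultimately have d: "(\<lambda>i. (b - a) * x0 i) \<in> W" by simp
    have "(\<lambda>i. inverse (b - a) * ((b - a) * x0 i) + 0 * x0 i) \<in> W" using cl[OF d d, of "inverse (b - a)" 0] by simp
    then have "x0 \<in> W" using ab by (simp add: mult.assoc[symmetric])
    then show False using x0W by simp
  qed
  define h where "h = (\<lambda>i. if i \<le> n then (SOME l. (\<lambda>j. unitv i j + (- l) * x0 j) \<in> W) else 0)"
  have hi: "(\<lambda>j. unitv i j + (- h i) * x0 j) \<in> W" if "i \<le> n" for i
  proof -
    have "\<exists>l. (\<lambda>j. unitv i j + (- l) * x0 j) \<in> W" using dec[OF unitv_vecs[OF that]] .
    then have "(\<lambda>j. unitv i j + (- (SOME l. (\<lambda>j. unitv i j + (- l) * x0 j) \<in> W)) * x0 j) \<in> W"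
      by (rule someI_ex)
    then show ?thesis unfolding h_def using that by simp
  qed
  have hv: "h \<in> vecs n" by (simp add: h_def vecs_def)
  have key: "(\<lambda>j. v j + (- ev n v h) * x0 j) \<in> W" if v: "v \<in> vecs n" for v
  proof -
    have "(\<lambda>j. \<Sum>i\<in>{..n}. v i * (unitv i j + (- h i) * x0 j)) \<in> W"
    proof -
      have "\<forall>i\<in>{..n}. (\<lambda>j. unitv i j + (- h i) * x0 j) \<in> W" using hi by simp
      moreover have "\<forall>x\<in>W. \<forall>y\<in>W. \<forall>a b. (\<lambda>i. a * x i + b * y i) \<in> W" using cl by blast
      ultimately show ?thesis
        using W_sum[where W=W and w="\<lambda>i j. unitv i j + (- h i) * x0 j" and c=v and F="{..n}", OF z0] by simp
    qed
    moreover have "(\<lambda>j. \<Sum>i\<in>{..n}. v i * (unitv i j + (- h i) * x0 j)) = (\<lambda>j. v j + (- ev n v h) * x0 j)"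
    proof
      fix j
      have "(\<Sum>i\<in>{..n}. v i * (unitv i j + (- h i) * x0 j))
          = (\<Sum>i\<in>{..n}. v i * unitv i j) + (\<Sum>i\<in>{..n}. v i * (- h i) * x0 j)"
        by (simp only: distrib_left sum.distrib mult.assoc)
      also have "(\<Sum>i\<in>{..n}. v i * unitv i j) = v j"
      proof (cases "j \<le> n")
        case True
        have "(\<Sum>i\<in>{..n}. v i * unitv i j) = (\<Sum>i\<in>{..n}. if i = j then v j else 0)" by (intro sum.cong) auto
        then show ?thesis using True by simp
      next
        case False
        then show ?thesis using v by (auto simp: vecs_def)
      qed
      also have "(\<Sum>i\<in>{..n}. v i * (- h i) * x0 j) = (- ev n v h) * x0 j"
        by (simp add: sum_distrib_right sum_negf)
      finally show "(\<Sum>i\<in>{..n}. v i * (unitv i j + (- h i) * x0 j)) = v j + (- ev n v h) * x0 j" .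
    qed
    ultimately show ?thesis by simp
  qed
  have "W = hyp n h"
  proof (intro equalityI subsetI)
    fix v assume vW: "v \<in> W"
    then have v: "v \<in> vecs n" using Wv by blast
    have "(\<lambda>j. v j + (- 0) * x0 j) \<in> W" using vW by simp
    then have "ev n v h = 0" using uniq key[OF v] by blast
    then show "v \<in> hyp n h" using v by simp
  next
    fix v assume "v \<in> hyp n h"
    then have v: "v \<in> vecs n" "ev n v h = 0" by auto
    then show "v \<in> W" using key[OF v(1)] by simp
  qed
  moreover have "h \<noteq> (\<lambda>_. 0)"
  proof
    assume "h = (\<lambda>_. 0)"
    then have "ev n x0 h = 0" by simp
    then show False using key[OF x0(1)] x0W by simp
  qed
  ultimately show ?thesis using hyp_of[OF hv] W_def by simp
qed

end

lemma line_sub: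
  assumes P: "a \<in> pg_points n" "b \<in> pg_points n" "x \<in> pg_points n" "y \<in> pg_points n" "r \<in> pg_points n"
    and "a \<noteq> b" "x \<noteq> y" "collinear_pts a b x" "collinear_pts a b y" "collinear_pts x y r"
  shows "collinear_pts a b r"
proof -
  have "collinear_pts x y a" using P_exch[OF P(1,2,3,4,1) assms(8,9) P_refl1[OF P(1,2)] assms(7)] .
  moreover have "collinear_pts x y b" using P_exch[OF P(1,2,3,4,2) assms(8,9) P_refl2[OF P(1,2)] assms(7)] .
  ultimately show ?thesis using P_exch[OF P(3,4,1,2,5) _ _ assms(10) assms(6)] by blast
qed

lemma two_lines:
  assumes P: "a \<in> pg_points n" "b \<in> pg_points n" "c \<in> pg_points n" "d \<in> pg_points n"
     "x \<in> pg_points n" "y \<in> pg_points n"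
    and "a \<noteq> b" "c \<noteq> d" "x \<noteq> y" "collinear_pts a b x" "collinear_pts a b y"
     "collinear_pts c d x" "collinear_pts c d y"
  shows "collinear_pts a b c"
proof -
  have "collinear_pts x y c" using P_exch[OF P(3,4,5,6,3) assms(12,13) P_refl1[OF P(3,4)] assms(9)] .
  then show ?thesis using line_sub[OF P(1,2,5,6,3) assms(7,9,10,11)] by blast
qed

lemma ncol_perm:
  assumes P: "x \<in> pg_points n" "y \<in> pg_points n" "z \<in> pg_points n"
    and d: "x \<noteq> y" "x \<noteq> z" "y \<noteq> z" and nc: "\<not> collinear_pts x y z"
  shows "\<not> collinear_pts y x z" "\<not> collinear_pts x z y" "\<not> collinear_pts y z x"
        "\<not> collinear_pts z x y" "\<not> collinear_pts z y x"
proof -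
  show 1: "\<not> collinear_pts y x z" using P_swap[OF P(2,1,3)] nc by blast
  show 2: "\<not> collinear_pts x z y" using P_exch2[OF P(1,3,2)] d nc by blast
  show 3: "\<not> collinear_pts y z x" using P_exch2[OF P(2,3,1)] P_swap[OF P(2,1,3)] d nc by blast
  show 4: "\<not> collinear_pts z x y" using P_swap[OF P(3,1,2)] P_exch2[OF P(1,3,2)] d nc by blast
  show 5: "\<not> collinear_pts z y x" using P_swap[OF P(3,2,1)] 3 by blast
qed

lemma hyp2_col:
  assumes "l \<in> pg_hyperplanes 2" "x \<in> pg_points 2" "y \<in> pg_points 2" "z \<in> pg_points 2"
    "x \<noteq> y" "x \<subseteq> l" "y \<subseteq> l" "z \<subseteq> l"
  shows "collinear_pts x y z"
proof (rule ccontr)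
  assume "\<not> collinear_pts x y z"
  then obtain G where G: "G \<in> pg_hyperplanes 2" "x \<subseteq> G" "y \<subseteq> G" "\<not> z \<subseteq> G"
    using sep2[OF assms(2,3,4)] by blast
  have "l = G" using unique2[OF assms(1) G(1) assms(2,3,5,6,7) G(2,3)] .
  then show False using G(4) assms(8) by simp
qed

lemma pt_sub_H:
  assumes "H \<in> pg_hyperplanes n" "x \<in> vecs n" "x \<noteq> (\<lambda>_. 0)"
  shows "pt x \<subseteq> H \<longleftrightarrow> x \<in> H"
proof -
  obtain f where f: "f \<in> vecs n" "H = hyp n f" using hyp_rep[OF assms(1)] by blast
  show ?thesis using pt_sub_hyp[OF assms(2), of f] f(2) assms(2) by simp
qed

lemma zero_in_H: "H \<in> pg_hyperplanes n \<Longrightarrow> (\<lambda>_. 0) \<in> H"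
  using hyp_rep[of H n] by (auto simp: vecs_def)

lemma H_sub_vecs: "H \<in> pg_hyperplanes n \<Longrightarrow> H \<subseteq> vecs n"
  using hyp_rep[of H n] by auto

locale kg =
  fixes n :: nat and \<theta> :: "(nat \<Rightarrow> 'k::division_ring) set \<Rightarrow> (nat \<Rightarrow> 'k) set"
  assumes n2: "n \<ge> 2" and coll: "collineation n \<theta>" and kang: "polar_22_kangaroo n \<theta>"
begin

abbreviation P where "P \<equiv> pg_points n"
abbreviation Hy where "Hy \<equiv> pg_hyperplanes n"
abbreviation im where "im H \<equiv> hyp_image n \<theta> H"
abbreviation col where "col \<equiv> collinear_pts"

lemma thP: "p \<in> P \<Longrightarrow> \<theta> p \<in> P" using th_P[OF coll] .
lemma thcol: "p \<in> P \<Longrightarrow> q \<in> P \<Longrightarrow> r \<in> P \<Longrightarrow> col (\<theta> p) (\<theta> q) (\<theta> r) \<longleftrightarrow> col p q r"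
  using th_col[OF coll] .
lemma imH: "H \<in> Hy \<Longrightarrow> im H \<in> Hy" using hi_hyp[OF coll n2] .
lemma impt: "p \<in> P \<Longrightarrow> p \<subseteq> H \<Longrightarrow> \<theta> p \<subseteq> im H" using hi_pt[OF coll] .

lemma K1:
  assumes "p \<in> P" "H \<in> Hy" "p \<subseteq> H" "\<theta> p \<noteq> p" "im H \<noteq> H"
  shows "\<not> p \<subseteq> im H \<and> \<not> \<theta> p \<subseteq> H"
  using kang assms unfolding polar_22_kangaroo_def pos_2_2'_def by metis

lemma L1: "H \<in> Hy \<Longrightarrow> im H \<noteq> H \<Longrightarrow> x \<in> P \<Longrightarrow> x \<subseteq> H \<Longrightarrow> x \<subseteq> im H \<Longrightarrow> \<theta> x = x"
  using K1 by blast

lemma L2: "p \<in> P \<Longrightarrow> \<theta> p \<noteq> p \<Longrightarrow> H \<in> Hy \<Longrightarrow> p \<subseteq> H \<Longrightarrow> \<theta> p \<subseteq> H \<Longrightarrow> im H = H"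
  using K1 by blast

lemma fixH: "H \<in> Hy \<Longrightarrow> im H = H \<Longrightarrow> p \<in> P \<Longrightarrow> p \<subseteq> H \<Longrightarrow> \<theta> p \<subseteq> H"
  using impt by metis

lemma LI:
  assumes q: "q \<in> P" "\<theta> q \<noteq> q" and x: "x \<in> P" "col q (\<theta> q) x"
  shows "col q (\<theta> q) (\<theta> x)"
proof (rule ccontr)
  assume nc: "\<not> col q (\<theta> q) (\<theta> x)"
  obtain G where G: "G \<in> Hy" "q \<subseteq> G" "\<theta> q \<subseteq> G" "\<not> \<theta> x \<subseteq> G"
    using sep2[OF q(1) thP[OF q(1)] thP[OF x(1)] nc] by blast
  have "im G = G" using L2[OF q(1,2) G(1,2,3)] .
  moreover have "x \<subseteq> G" using hyp_sub[OF G(1) q(1) thP[OF q(1)] x(1) G(2,3) x(2)] .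
  ultimately show False using fixH[OF G(1)] x(1) G(4) by blast
qed

lemma exists_nonfixed_hyp: assumes "\<exists>p\<in>P. \<theta> p \<noteq> p" shows "\<exists>K\<in>Hy. im K \<noteq> K"
proof -
  obtain p where p: "p \<in> P" "\<theta> p \<noteq> p" using assms by blast
  obtain H where H: "H \<in> Hy" "p \<subseteq> H" "\<not> \<theta> p \<subseteq> H" using sep1[OF p(1) thP[OF p(1)]] p(2) by metis
  have "im H \<noteq> H" using fixH[OF H(1) _ p(1) H(2)] H(3) by blast
  then show ?thesis using H(1) by blast
qed

lemma axis_from_center:
  assumes K: "K \<in> Hy" "im K \<noteq> K"
    and c: "c \<in> P" "\<theta> c = c" "\<not> c \<subseteq> K"
    and cen: "\<forall>x\<in>P. x \<noteq> c \<longrightarrow> col c x (\<theta> x)"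
  shows "\<exists>A\<in>Hy. \<forall>p\<in>P. p \<subseteq> A \<longrightarrow> \<theta> p = p"
proof -
  have Kt: "im K \<in> Hy" using imH[OF K(1)] .
  have claimA: "\<theta> z = z" if xy: "x \<in> P" "y \<in> P" "\<theta> x = x" "\<theta> y = y" "x \<noteq> y" "\<not> col x y c"
     and z: "z \<in> P" "col x y z" for x y z
  proof (rule ccontr)
    assume nz: "\<theta> z \<noteq> z"
    have zc: "z \<noteq> c" using z(2) xy(6) by blast
    have "col x y (\<theta> z)" using thcol[OF xy(1,2) z(1)] xy(3,4) z(2) by simp
    moreover have "col c z (\<theta> z)" using cen z(1) zc by blast
    moreover have "col c z z" using P_refl2[OF c(1) z(1)] .
    ultimately have "col x y c"
      using two_lines[OF xy(1,2) c(1) z(1) z(1) thP[OF z(1)] xy(5) zc[symmetric] nz[symmetric] z(2)] by blast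
    then show False using xy(6) by simp
  qed
  obtain B where B: "B \<in> Hy" "K \<inter> im K \<subseteq> B" "c \<subseteq> B" using pencil_ex[OF K(1) Kt K(2)[symmetric] c(1)] by blast
  show ?thesis
  proof (cases "\<forall>a\<in>P. \<theta> a = a \<and> a \<noteq> c \<longrightarrow> a \<subseteq> B")
    case True
    have "\<theta> z = z" if z: "z \<in> P" "z \<subseteq> B" for z
    proof (rule ccontr)
      assume nz: "\<theta> z \<noteq> z"
      have zc: "z \<noteq> c" using nz c(2) by blast
      obtain K' where K': "K' \<in> Hy" "z \<subseteq> K'" "\<not> c \<subseteq> K'" using sep1[OF z(1) c(1) zc] by blast
      have ctz: "col c z (\<theta> z)" using cen z(1) zc by blast
      have tzK: "\<not> \<theta> z \<subseteq> K'"
      proof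
        assume "\<theta> z \<subseteq> K'"
        have "col z (\<theta> z) c" using P_exch3[OF c(1) z(1) thP[OF z(1)] ctz nz] .
        then have "c \<subseteq> K'" using hyp_sub[OF K'(1) z(1) thP[OF z(1)] c(1) K'(2) \<open>\<theta> z \<subseteq> K'\<close>] by blast
        then show False using K'(3) by simp
      qed
      have K'n: "im K' \<noteq> K'" using fixH[OF K'(1) _ z(1) K'(2)] tzK by blast
      have K't: "im K' \<in> Hy" using imH[OF K'(1)] .
      have "K' \<inter> im K' \<subseteq> B"
      proof
        fix x assume x: "x \<in> K' \<inter> im K'"
        show "x \<in> B"
        proof (cases "x = (\<lambda>_. 0)")
          case True then show ?thesis using zero_in_H[OF B(1)] by simp
        next
          case False
          have xv: "x \<in> vecs n" using x H_sub_vecs[OF K'(1)] by blast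
          have xP: "pt x \<in> P" using pt_pt[OF xv False] .
          have "pt x \<subseteq> K'" "pt x \<subseteq> im K'" using x pt_sub_H[OF K'(1) xv False] pt_sub_H[OF K't xv False] by auto
          then have fx: "\<theta> (pt x) = pt x" using L1[OF K'(1) K'n xP] by blast
          have "pt x \<noteq> c" using \<open>pt x \<subseteq> K'\<close> K'(3) by blast
          then have "pt x \<subseteq> B" using True xP fx by blast
          then show ?thesis using pt_sub_H[OF B(1) xv False] by simp
        qed
      qed
      moreover have "B \<noteq> K'" using B(3) K'(3) by blast
      ultimately have "K' \<inter> B \<subseteq> im K'" using pencil_sub[OF K'(1) K't B(1) K'n[symmetric]] by blast
      then have "z \<subseteq> im K'" using K'(2) z(2) by blast
      then show False using L1[OF K'(1) K'n z(1) K'(2)] nz by simp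
    qed
    then show ?thesis using B(1) by blast
  next
    case False
    then obtain a where a: "a \<in> P" "\<theta> a = a" "a \<noteq> c" "\<not> a \<subseteq> B" by blast
    obtain A where A: "A \<in> Hy" "K \<inter> im K \<subseteq> A" "a \<subseteq> A" using pencil_ex[OF K(1) Kt K(2)[symmetric] a(1)] by blast
    have cA: "\<not> c \<subseteq> A"
    proof
      assume "c \<subseteq> A"
      then have "A = B" using pencil_uniq[OF K(1) Kt A(1) B(1) K(2)[symmetric] A(2) B(2) c(1) _ B(3) c(3)] by blast
      then show False using a(4) A(3) by simp
    qed
    have aK: "\<not> a \<subseteq> K"
    proof
      assume "a \<subseteq> K"
      then have "a \<subseteq> im K" using impt[OF a(1)] a(2) by metis
      then have "a \<subseteq> K \<inter> im K" using \<open>a \<subseteq> K\<close> by blast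
      then show False using B(2) a(4) by blast
    qed
    have AK: "A \<noteq> K" using A(3) aK by blast
    have KA: "K \<inter> A \<subseteq> im K" using pencil_sub[OF K(1) Kt A(1) K(2)[symmetric] A(2) AK] .
    have "\<theta> z = z" if z: "z \<in> P" "z \<subseteq> A" for z
    proof (cases "z = a")
      case True then show ?thesis using a(2) by simp
    next
      case False
      obtain s where s: "s \<in> P" "col a z s" "s \<subseteq> K" using hyp_meet[OF K(1) a(1) z(1) False[symmetric]] by blast
      have sA: "s \<subseteq> A" using hyp_sub[OF A(1) a(1) z(1) s(1) A(3) z(2) s(2)] .
      have "s \<subseteq> im K" using KA s(3) sA by blast
      then have fs: "\<theta> s = s" using L1[OF K(1) K(2) s(1) s(3)] by blast
      have sa: "s \<noteq> a" using s(3) aK by blast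
      have ncol: "\<not> col a s c"
      proof
        assume "col a s c"
        then have "c \<subseteq> A" using hyp_sub[OF A(1) a(1) s(1) c(1) A(3) sA] by blast
        then show False using cA by simp
      qed
      have "col a s z" using P_exch2[OF a(1) z(1) s(1) s(2) sa] .
      then show ?thesis using claimA[OF a(1) s(1) a(2) fs sa[symmetric] ncol z(1)] by blast
    qed
    then show ?thesis using A(1) by blast
  qed
qed

end

locale kgK = kg +
  fixes K
  assumes K: "K \<in> Hy" "im K \<noteq> K"
begin

definition NS where "NS q \<longleftrightarrow> q \<in> P \<and> q \<subseteq> K \<and> \<not> q \<subseteq> im K"

lemma Kt: "im K \<in> Hy" using imH[OF K(1)] .

lemma s1: "x \<in> P \<Longrightarrow> x \<subseteq> K \<Longrightarrow> x \<subseteq> im K \<Longrightarrow> \<theta> x = x"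
  using L1[OF K] by blast

lemma s2: assumes "NS q" shows "\<theta> q \<noteq> q" "\<not> \<theta> q \<subseteq> K"
proof -
  have q: "q \<in> P" "q \<subseteq> K" "\<not> q \<subseteq> im K" using assms NS_def by auto
  show "\<theta> q \<noteq> q" using impt[OF q(1,2)] q(3) by auto
  then show "\<not> \<theta> q \<subseteq> K" using K1[OF q(1) K(1) q(2)] K(2) by blast
qed

lemma NS_P: "NS q \<Longrightarrow> q \<in> P" using NS_def by simp

lemma s4:
  assumes "NS q" "x \<in> P" "col q (\<theta> q) x" "x \<subseteq> K"
  shows "x = q"
proof (rule ccontr)
  assume xq: "x \<noteq> q"
  have q: "q \<in> P" "q \<subseteq> K" using assms(1) NS_def by auto
  have "col q x (\<theta> q)" using P_exch2[OF q(1) thP[OF q(1)] assms(2,3) xq] .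
  then have "\<theta> q \<subseteq> K" using hyp_sub[OF K(1) q(1) assms(2) thP[OF q(1)] q(2) assms(4)] by blast
  then show False using s2[OF assms(1)] by simp
qed

lemma meet_ex:
  assumes "NS q" "NS r" "q \<noteq> r"
  shows "\<exists>c\<in>P. col q (\<theta> q) c \<and> col r (\<theta> r) c"
proof -
  have q: "q \<in> P" "q \<subseteq> K" "\<not> q \<subseteq> im K" using assms(1) NS_def by auto
  have r: "r \<in> P" "r \<subseteq> K" "\<not> r \<subseteq> im K" using assms(2) NS_def by auto
  obtain s where s: "s \<in> P" "col q r s" "s \<subseteq> im K" using hyp_meet[OF Kt q(1) r(1) assms(3)] by blast
  have sK: "s \<subseteq> K" using hyp_sub[OF K(1) q(1) r(1) s(1) q(2) r(2) s(2)] .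
  have fs: "\<theta> s = s" using s1[OF s(1) sK s(3)] .
  have "col (\<theta> q) (\<theta> r) s" using thcol[OF q(1) r(1) s(1)] s(2) fs by simp
  moreover have "s \<noteq> r" using s(3) r(3) by blast
  ultimately show ?thesis
    using meet_lines[OF q(1) r(1) thP[OF q(1)] thP[OF r(1)] s(1) s2(1)[OF assms(1), symmetric] _ s(2)] by blast
qed

lemma meet_uniq:
  assumes "NS q" "NS r" "q \<noteq> r" "c \<in> P" "c' \<in> P"
    "col q (\<theta> q) c" "col r (\<theta> r) c" "col q (\<theta> q) c'" "col r (\<theta> r) c'"
  shows "c = c'"
proof (rule ccontr)
  assume cc: "c \<noteq> c'"
  have q: "q \<in> P" "q \<subseteq> K" using assms(1) NS_def by auto
  have r: "r \<in> P" "r \<subseteq> K" using assms(2) NS_def by auto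
  have "col q (\<theta> q) r"
    using two_lines[OF q(1) thP[OF q(1)] r(1) thP[OF r(1)] assms(4,5) s2(1)[OF assms(1), symmetric]
        s2(1)[OF assms(2), symmetric] cc assms(6,8,7,9)] .
  then have "r = q" using s4[OF assms(1) r(1) _ r(2)] by blast
  then show False using assms(3) by simp
qed

lemma meet_props:
  assumes "NS q" "NS r" "q \<noteq> r" "c \<in> P" "col q (\<theta> q) c" "col r (\<theta> r) c"
  shows "\<theta> c = c" "\<not> c \<subseteq> K"
proof -
  have q: "q \<in> P" using assms(1) NS_def by auto
  have r: "r \<in> P" using assms(2) NS_def by auto
  have "col q (\<theta> q) (\<theta> c)" using LI[OF q s2(1)[OF assms(1)] assms(4,5)] .
  moreover have "col r (\<theta> r) (\<theta> c)" using LI[OF r s2(1)[OF assms(2)] assms(4,6)] .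
  ultimately show "\<theta> c = c" using meet_uniq[OF assms(1-3) thP[OF assms(4)] assms(4) _ _ assms(5,6)] by blast
  show "\<not> c \<subseteq> K"
  proof
    assume "c \<subseteq> K"
    then have "c = q" "c = r" using s4[OF assms(1) assms(4,5)] s4[OF assms(2) assms(4,6)] by auto
    then show False using assms(3) by simp
  qed
qed

lemma tri:
  assumes "NS q" "NS r" "NS t" "q \<noteq> r" "q \<noteq> t" "r \<noteq> t"
    and c1: "c1 \<in> P" "col q (\<theta> q) c1" "col r (\<theta> r) c1"
    and c2: "c2 \<in> P" "col q (\<theta> q) c2" "col t (\<theta> t) c2"
    and ne: "c1 \<noteq> c2"
  shows "col q r t"
proof -
  have q: "q \<in> P" "q \<subseteq> K" using assms(1) NS_def by auto
  have r: "r \<in> P" "r \<subseteq> K" using assms(2) NS_def by auto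
  have t: "t \<in> P" "t \<subseteq> K" using assms(3) NS_def by auto
  obtain c3 where c3: "c3 \<in> P" "col r (\<theta> r) c3" "col t (\<theta> t) c3" using meet_ex[OF assms(2,3,6)] by blast
  have c13: "c1 \<noteq> c3"
  proof
    assume "c1 = c3"
    then have "c1 = c2" using meet_uniq[OF assms(1,3,5) c1(1) c2(1) c1(2) _ c2(2,3)] c3(3) by blast
    then show False using ne by simp
  qed
  have c23: "c2 \<noteq> c3"
  proof
    assume "c2 = c3"
    then have "c1 = c2" using meet_uniq[OF assms(1,2,4) c1(1) c2(1) c1(2,3) c2(2)] c3(2) by blast
    then show False using ne by simp
  qed
  have "col c1 c2 q" using P_exch[OF q(1) thP[OF q(1)] c1(1) c2(1) q(1) c1(2) c2(2) P_refl1[OF q(1) thP[OF q(1)]] ne] .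
  moreover have "col c1 c3 r" using P_exch[OF r(1) thP[OF r(1)] c1(1) c3(1) r(1) c1(3) c3(2) P_refl1[OF r(1) thP[OF r(1)]] c13] .
  moreover have "col c2 c3 t" using P_exch[OF t(1) thP[OF t(1)] c2(1) c3(1) t(1) c2(3) c3(3) P_refl1[OF t(1) thP[OF t(1)]] c23] .
  moreover have "\<not> c1 \<subseteq> K" using meet_props(2)[OF assms(1,2,4) c1] .
  ultimately show ?thesis using triangle[OF K(1) c1(1) c2(1) c3(1) q(1) r(1) t(1)] q(2) r(2) t(2) by blast
qed

lemma ex_q0: "\<exists>q. NS q"
proof (rule ccontr)
  assume "\<not> (\<exists>q. NS q)"
  then have "\<forall>p\<in>P. p \<subseteq> K \<longrightarrow> p \<subseteq> im K" using NS_def by blast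
  then have "K = im K" using hyp_pts_eq[OF K(1) Kt] by blast
  then show False using K(2) by simp
qed

lemma ex_r:
  assumes "NS q0" shows "\<exists>r. NS r \<and> r \<noteq> q0"
proof -
  have q: "q0 \<in> P" "q0 \<subseteq> K" "\<not> q0 \<subseteq> im K" using assms NS_def by auto
  obtain s where s: "s \<in> P" "s \<subseteq> K" "s \<subseteq> im K" using share_point[OF n2 K(1) Kt] by blast
  have qs: "q0 \<noteq> s" using q(3) s(3) by blast
  obtain r where r: "r \<in> P" "col q0 s r" "r \<noteq> q0" "r \<noteq> s" using third_point[OF q(1) s(1) qs] by blast
  have rK: "r \<subseteq> K" using hyp_sub[OF K(1) q(1) s(1) r(1) q(2) s(2) r(2)] .
  have "\<not> r \<subseteq> im K"
  proof
    assume "r \<subseteq> im K"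
    have "col s r q0" using P_exch3[OF q(1) s(1) r(1) r(2) r(4)] .
    then have "q0 \<subseteq> im K" using hyp_sub[OF Kt s(1) r(1) q(1) s(3) \<open>r \<subseteq> im K\<close>] by blast
    then show False using q(3) by simp
  qed
  then show ?thesis using r(1,3) rK NS_def by blast
qed

end

context kgK
begin

definition cf where "cf q0 r = (SOME c. c \<in> P \<and> col q0 (\<theta> q0) c \<and> col r (\<theta> r) c)"

lemma cf_props:
  assumes "NS q0" "NS r" "r \<noteq> q0"
  shows "cf q0 r \<in> P" "col q0 (\<theta> q0) (cf q0 r)" "col r (\<theta> r) (cf q0 r)"
proof -
  have "\<exists>c. c \<in> P \<and> col q0 (\<theta> q0) c \<and> col r (\<theta> r) c" using meet_ex[OF assms(1,2) assms(3)[symmetric]] by blast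
  then have "cf q0 r \<in> P \<and> col q0 (\<theta> q0) (cf q0 r) \<and> col r (\<theta> r) (cf q0 r)"
    unfolding cf_def by (rule someI_ex)
  then show "cf q0 r \<in> P" "col q0 (\<theta> q0) (cf q0 r)" "col r (\<theta> r) (cf q0 r)" by auto
qed

lemma center_case:
  assumes q0: "NS q0" and conc: "\<forall>r1 r2. NS r1 \<and> r1 \<noteq> q0 \<and> NS r2 \<and> r2 \<noteq> q0 \<longrightarrow> cf q0 r1 = cf q0 r2"
  shows "\<exists>A\<in>Hy. \<forall>p\<in>P. p \<subseteq> A \<longrightarrow> \<theta> p = p"
proof -
  obtain r0 where r0: "NS r0" "r0 \<noteq> q0" using ex_r[OF q0] by blast
  define c where "c = cf q0 r0"
  have cP: "c \<in> P" and c1: "col q0 (\<theta> q0) c" and c2: "col r0 (\<theta> r0) c"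
    using cf_props[OF q0 r0] unfolding c_def by auto
  have fc: "\<theta> c = c" and cK: "\<not> c \<subseteq> K" using meet_props[OF q0 r0(1) r0(2)[symmetric] cP c1 c2] by auto
  have C2: "col q (\<theta> q) c" if "NS q" for q
  proof (cases "q = q0")
    case True then show ?thesis using c1 by simp
  next
    case False
    then have "cf q0 q = c" using conc that r0 unfolding c_def by blast
    then show ?thesis using cf_props(3)[OF q0 that False] by simp
  qed
  have C3: "col c x (\<theta> x)" if x: "x \<in> P" "x \<noteq> c" for x
  proof -
    obtain q where q: "q \<in> P" "col c x q" "q \<subseteq> K" using hyp_meet[OF K(1) cP x(1) x(2)[symmetric]] by blast
    have qc: "q \<noteq> c" using q(3) cK by blast
    have cqx: "col c q x" using P_exch2[OF cP x(1) q(1) q(2) qc] .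
    show ?thesis
    proof (cases "q \<subseteq> im K")
      case True
      have fq: "\<theta> q = q" using s1[OF q(1) q(3) True] .
      have "col c q (\<theta> x)" using thcol[OF cP q(1) x(1)] cqx fc fq by simp
      then show ?thesis using P_exch[OF cP q(1) cP x(1) thP[OF x(1)] P_refl1[OF cP q(1)] cqx _ x(2)[symmetric]] by blast
    next
      case False
      then have nq: "NS q" using q NS_def by blast
      have qtc: "col q (\<theta> q) c" using C2[OF nq] .
      have tq: "\<theta> q \<noteq> q" using s2(1)[OF nq] .
      have qcq: "col q c (\<theta> q)" using P_exch2[OF q(1) thP[OF q(1)] cP qtc qc[symmetric]] .
      have qcx: "col q c x" using P_swap[OF cP q(1) x(1) cqx] .
      have "col q (\<theta> q) x"
        using P_exch[OF q(1) cP q(1) thP[OF q(1)] x(1) P_refl1[OF q(1) cP] qcq qcx tq[symmetric]] .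
      then have "col q (\<theta> q) (\<theta> x)" using LI[OF q(1) tq x(1)] by blast
      then show ?thesis
        using P_exch[OF q(1) thP[OF q(1)] cP x(1) thP[OF x(1)] qtc \<open>col q (\<theta> q) x\<close> _ x(2)[symmetric]] by blast
    qed
  qed
  show ?thesis using axis_from_center[OF K cP fc cK] C3 by blast
qed

lemma nonconc_col:
  assumes q0: "NS q0" and r1: "NS r1" "r1 \<noteq> q0" and r2: "NS r2" "r2 \<noteq> q0"
    and ne: "cf q0 r1 \<noteq> cf q0 r2"
  shows "col q0 r1 r2" "r1 \<noteq> r2"
proof -
  show r12: "r1 \<noteq> r2" using ne by auto
  show "col q0 r1 r2"
    using tri[OF q0 r1(1) r2(1) r1(2)[symmetric] r2(2)[symmetric] r12 cf_props[OF q0 r1] cf_props[OF q0 r2] ne] .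
qed

lemma n3_contra:
  assumes n3: "n \<ge> 3" and q0: "NS q0" and r1: "NS r1" "r1 \<noteq> q0" and r2: "NS r2" "r2 \<noteq> q0"
    and ne: "cf q0 r1 \<noteq> cf q0 r2"
  shows False
proof -
  have q: "q0 \<in> P" "q0 \<subseteq> K" "\<not> q0 \<subseteq> im K" using q0 NS_def by auto
  have r1P: "r1 \<in> P" using r1 NS_def by auto
  have r2P: "r2 \<in> P" using r2 NS_def by auto
  have c012: "col q0 r1 r2" using nonconc_col[OF q0 r1 r2 ne] by blast
  have "\<exists>t. NS t \<and> \<not> col q0 r1 t"
  proof -
    obtain t where t: "t \<in> P" "t \<subseteq> K" "\<not> col q0 r1 t" using off_line_in_hyp[OF n3 K(1) q(1) r1P] by blast
    show ?thesis
    proof (cases "t \<subseteq> im K")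
      case False then show ?thesis using t NS_def by blast
    next
      case True
      have tq: "q0 \<noteq> t" using q(3) True by blast
      obtain t' where t': "t' \<in> P" "col q0 t t'" "t' \<noteq> q0" "t' \<noteq> t" using third_point[OF q(1) t(1) tq] by blast
      have t'K: "t' \<subseteq> K" using hyp_sub[OF K(1) q(1) t(1) t'(1) q(2) t(2) t'(2)] .
      have t'nK: "\<not> t' \<subseteq> im K"
      proof
        assume "t' \<subseteq> im K"
        have "col t t' q0" using P_exch3[OF q(1) t(1) t'(1) t'(2) t'(4)] .
        then have "q0 \<subseteq> im K" using hyp_sub[OF Kt t(1) t'(1) q(1) True \<open>t' \<subseteq> im K\<close>] by blast
        then show False using q(3) by simp
      qed
      have "\<not> col q0 r1 t'"
      proof
        assume "col q0 r1 t'"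
        have "col q0 t' t" using P_exch2[OF q(1) t(1) t'(1) t'(2) t'(3)] .
        then have "col q0 r1 t"
          using line_sub[OF q(1) r1P q(1) t'(1) t(1) r1(2)[symmetric] t'(3)[symmetric] P_refl1[OF q(1) r1P] \<open>col q0 r1 t'\<close>] by blast
        then show False using t(3) by simp
      qed
      then show ?thesis using t'(1) t'K t'nK NS_def by blast
    qed
  qed
  then obtain t where t: "NS t" "\<not> col q0 r1 t" by blast
  have tP: "t \<in> P" using t(1) NS_def by auto
  have tq0: "t \<noteq> q0" using t(2) P_refl1[OF q(1) r1P] by blast
  have tr1: "r1 \<noteq> t" using t(2) P_refl2[OF q(1) r1P] by blast
  have nc2: "\<not> col q0 r2 t"
  proof
    assume "col q0 r2 t"
    then have "col q0 r1 t"
      using line_sub[OF q(1) r1P q(1) r2P tP r1(2)[symmetric] r2(2)[symmetric] P_refl1[OF q(1) r1P] c012] by blast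
    then show False using t(2) by simp
  qed
  have tr2: "r2 \<noteq> t" using nc2 P_refl2[OF q(1) r2P] by blast
  have e1: "cf q0 r1 = cf q0 t"
  proof (rule ccontr)
    assume "cf q0 r1 \<noteq> cf q0 t"
    then have "col q0 r1 t" using nonconc_col[OF q0 r1 t(1) tq0] by blast
    then show False using t(2) by simp
  qed
  have e2: "cf q0 r2 = cf q0 t"
  proof (rule ccontr)
    assume "cf q0 r2 \<noteq> cf q0 t"
    then have "col q0 r2 t" using nonconc_col[OF q0 r2 t(1) tq0] by blast
    then show False using nc2 by simp
  qed
  show False using e1 e2 ne by simp
qed

end

context kgK
begin

lemma baer_case:
  assumes n2': "n = 2" and q0: "NS q0" and r1: "NS r1" "r1 \<noteq> q0" and r2: "NS r2" "r2 \<noteq> q0"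
    and ne: "cf q0 r1 \<noteq> cf q0 r2"
  shows "baer_collineation \<theta>"
proof -
  have U2: "H1 = H2" if "H1 \<in> Hy" "H2 \<in> Hy" "p \<in> P" "q \<in> P" "p \<noteq> q" "p \<subseteq> H1" "q \<subseteq> H1" "p \<subseteq> H2" "q \<subseteq> H2"
    for H1 H2 p q :: "(nat \<Rightarrow> 'k::division_ring) set" using unique2[of H1 H2 p q] that n2' by simp
  have FP2: "\<exists>l\<in>Hy. p \<subseteq> l \<and> q \<subseteq> l \<and> im l = l" if pq: "p \<in> P" "q \<in> P" "p \<noteq> q" "\<theta> p = p" "\<theta> q = q" for p q
  proof -
    obtain l where l: "l \<in> Hy" "p \<subseteq> l" "q \<subseteq> l" using through2[OF n2 pq(1,2)] by blast
    have "p \<subseteq> im l" "q \<subseteq> im l" using impt[OF pq(1) l(2)] impt[OF pq(2) l(3)] pq(4,5) by auto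
    then have "im l = l" using U2[OF imH[OF l(1)] l(1) pq(1,2,3)] l(2,3) by blast
    then show ?thesis using l by blast
  qed
  have FL2: "\<exists>x\<in>P. x \<subseteq> l \<and> x \<subseteq> m \<and> \<theta> x = x" if lm: "l \<in> Hy" "m \<in> Hy" "im l = l" "im m = m" "l \<noteq> m" for l m
  proof -
    obtain x where x: "x \<in> P" "x \<subseteq> l" "x \<subseteq> m" using share_point[OF n2 lm(1,2)] by blast
    have "\<theta> x \<subseteq> l" "\<theta> x \<subseteq> m" using impt[OF x(1,2)] impt[OF x(1,3)] lm(3,4) by auto
    then have "\<theta> x = x"
      using U2[OF lm(1,2) x(1) thP[OF x(1)]] x(2,3) lm(5) by blast
    then show ?thesis using x by blast
  qed
  have q: "q0 \<in> P" "q0 \<subseteq> K" "\<not> q0 \<subseteq> im K" using q0 NS_def by auto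
  have r1P: "r1 \<in> P" using r1 NS_def by auto
  have r2P: "r2 \<in> P" using r2 NS_def by auto
  have r12: "r1 \<noteq> r2" using ne by auto
  define c1 where "c1 = cf q0 r1"
  define c2 where "c2 = cf q0 r2"
  have c1: "c1 \<in> P" "col q0 (\<theta> q0) c1" "col r1 (\<theta> r1) c1" using cf_props[OF q0 r1] c1_def by auto
  have c2: "c2 \<in> P" "col q0 (\<theta> q0) c2" "col r2 (\<theta> r2) c2" using cf_props[OF q0 r2] c2_def by auto
  obtain c3 where c3: "c3 \<in> P" "col r1 (\<theta> r1) c3" "col r2 (\<theta> r2) c3" using meet_ex[OF r1(1) r2(1) r12] by blast
  have c12: "c1 \<noteq> c2" using ne c1_def c2_def by simp
  have fc1: "\<theta> c1 = c1" "\<not> c1 \<subseteq> K" using meet_props[OF q0 r1(1) r1(2)[symmetric] c1] by auto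
  have fc2: "\<theta> c2 = c2" "\<not> c2 \<subseteq> K" using meet_props[OF q0 r2(1) r2(2)[symmetric] c2] by auto
  have fc3: "\<theta> c3 = c3" "\<not> c3 \<subseteq> K" using meet_props[OF r1(1) r2(1) r12 c3] by auto
  have c13: "c1 \<noteq> c3"
  proof
    assume "c1 = c3"
    then have "c1 = c2" using meet_uniq[OF q0 r2(1) r2(2)[symmetric] c1(1) c2(1) c1(2) _ c2(2,3)] c3(3) by blast
    then show False using c12 by simp
  qed
  have c23: "c2 \<noteq> c3"
  proof
    assume "c2 = c3"
    then have "c1 = c2" using meet_uniq[OF q0 r1(1) r1(2)[symmetric] c1(1) c2(1) c1(2,3) c2(2)] c3(2) by blast
    then show False using c12 by simp
  qed
  obtain s0 where s0: "s0 \<in> P" "s0 \<subseteq> K" "s0 \<subseteq> im K" using share_point[OF n2 K(1) Kt] by blast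
  have fs0: "\<theta> s0 = s0" using s1[OF s0] .
  have s0c: "s0 \<noteq> c1" "s0 \<noteq> c2" "s0 \<noteq> c3" using s0(2) fc1(2) fc2(2) fc3(2) by auto
  have tq0: "\<theta> q0 \<in> P" using thP[OF q(1)] .
  have tr1: "\<theta> r1 \<in> P" using thP[OF r1P] .
  have tr2: "\<theta> r2 \<in> P" using thP[OF r2P] .
  have nq0: "q0 \<noteq> \<theta> q0" using s2(1)[OF q0] by simp
  have nr1: "r1 \<noteq> \<theta> r1" using s2(1)[OF r1(1)] by simp
  have nr2: "r2 \<noteq> \<theta> r2" using s2(1)[OF r2(1)] by simp
  have n123: "\<not> col c1 c2 c3"
  proof
    assume "col c1 c2 c3"
    then have "col q0 (\<theta> q0) c3" using line_sub[OF q(1) tq0 c1(1) c2(1) c3(1) nq0 c12 c1(2) c2(2)] by blast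
    then have "c1 = c3" using meet_uniq[OF q0 r1(1) r1(2)[symmetric] c1(1) c3(1) c1(2,3) _ c3(2)] by blast
    then show False using c13 by simp
  qed
  have n12s: "\<not> col c1 c2 s0"
  proof
    assume "col c1 c2 s0"
    then have "col q0 (\<theta> q0) s0" using line_sub[OF q(1) tq0 c1(1) c2(1) s0(1) nq0 c12 c1(2) c2(2)] by blast
    then have "s0 = q0" using s4[OF q0 s0(1) _ s0(2)] by blast
    then show False using q(3) s0(3) by simp
  qed
  have n13s: "\<not> col c1 c3 s0"
  proof
    assume "col c1 c3 s0"
    then have "col r1 (\<theta> r1) s0" using line_sub[OF r1P tr1 c1(1) c3(1) s0(1) nr1 c13 c1(3) c3(2)] by blast
    then have "s0 = r1" using s4[OF r1(1) s0(1) _ s0(2)] by blast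
    then show False using r1(1) s0(3) NS_def by simp
  qed
  have n23s: "\<not> col c2 c3 s0"
  proof
    assume "col c2 c3 s0"
    then have "col r2 (\<theta> r2) s0" using line_sub[OF r2P tr2 c2(1) c3(1) s0(1) nr2 c23 c2(3) c3(3)] by blast
    then have "s0 = r2" using s4[OF r2(1) s0(1) _ s0(2)] by blast
    then show False using r2(1) s0(3) NS_def by simp
  qed
  note N1 = ncol_perm[OF c1(1) c2(1) c3(1) c12 c13 c23 n123]
  note N2 = ncol_perm[OF c1(1) c2(1) s0(1) c12 s0c(1)[symmetric] s0c(2)[symmetric] n12s]
  note N3 = ncol_perm[OF c1(1) c3(1) s0(1) c13 s0c(1)[symmetric] s0c(3)[symmetric] n13s]
  note N4 = ncol_perm[OF c2(1) c3(1) s0(1) c23 s0c(2)[symmetric] s0c(3)[symmetric] n23s]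
  define S where "S = {p \<in> pg_points 2. \<theta> p = p}"
  define L where "L = {l \<in> pg_hyperplanes 2. hyp_image 2 \<theta> l = l}"
  have S_iff: "p \<in> S \<longleftrightarrow> p \<in> P \<and> \<theta> p = p" for p using S_def n2' by simp
  have L_iff: "l \<in> L \<longleftrightarrow> l \<in> Hy \<and> im l = l" for l using L_def n2' by simp
  have quad: "\<exists>a\<in>S. \<exists>b\<in>S. \<exists>c\<in>S. \<exists>d\<in>S. distinct [a,b,c,d] \<and>
        (\<forall>x\<in>{a,b,c,d}. \<forall>y\<in>{a,b,c,d}. \<forall>z\<in>{a,b,c,d}. distinct [x,y,z] \<longrightarrow> \<not> collinear_pts x y z)"
  proof (intro bexI conjI)
    show "distinct [c1, c2, c3, s0]" using c12 c13 c23 s0c by auto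
    show "\<forall>x\<in>{c1,c2,c3,s0}. \<forall>y\<in>{c1,c2,c3,s0}. \<forall>z\<in>{c1,c2,c3,s0}. distinct [x,y,z] \<longrightarrow> \<not> collinear_pts x y z"
    proof (intro ballI impI)
      fix x y z assume xyz: "x \<in> {c1,c2,c3,s0}" "y \<in> {c1,c2,c3,s0}" "z \<in> {c1,c2,c3,s0}" "distinct [x,y,z]"
      from xyz(1) consider "x = c1" | "x = c2" | "x = c3" | "x = s0" by blast
      then show "\<not> collinear_pts x y z"
      proof cases
        case 1 then show ?thesis using xyz n123 n12s n13s n23s N1 N2 N3 N4 by (elim insertE) auto
      next
        case 2 then show ?thesis using xyz n123 n12s n13s n23s N1 N2 N3 N4 by (elim insertE) auto
      next
        case 3 then show ?thesis using xyz n123 n12s n13s n23s N1 N2 N3 N4 by (elim insertE) auto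
      next
        case 4 then show ?thesis using xyz n123 n12s n13s n23s N1 N2 N3 N4 by (elim insertE) auto
      qed
    qed
  qed (auto simp: S_iff c1(1) c2(1) c3(1) s0(1) fc1(1) fc2(1) fc3(1) fs0)
  have sub: "subplane S L"
    unfolding subplane_def
  proof (intro conjI)
    show "S \<subseteq> pg_points 2" using S_def by auto
    show "L \<subseteq> pg_hyperplanes 2" using L_def by auto
    show "\<forall>p\<in>S. \<forall>q\<in>S. p \<noteq> q \<longrightarrow> (\<exists>l\<in>L. p \<subseteq> l \<and> q \<subseteq> l)"
    proof (intro ballI impI)
      fix p q assume pq: "p \<in> S" "q \<in> S" "p \<noteq> q"
      have h: "p \<in> P" "\<theta> p = p" "q \<in> P" "\<theta> q = q" using pq(1,2) S_iff by auto
      obtain l where "l \<in> Hy" "p \<subseteq> l" "q \<subseteq> l" "im l = l" using FP2[OF h(1) h(3) pq(3) h(2) h(4)] by blast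
      then show "\<exists>l\<in>L. p \<subseteq> l \<and> q \<subseteq> l" using L_iff by blast
    qed
    show "\<forall>l\<in>L. \<forall>m\<in>L. l \<noteq> m \<longrightarrow> (\<exists>p\<in>S. p \<subseteq> l \<and> p \<subseteq> m)"
    proof (intro ballI impI)
      fix l m assume lm: "l \<in> L" "m \<in> L" "l \<noteq> m"
      have h: "l \<in> Hy" "im l = l" "m \<in> Hy" "im m = m" using lm(1,2) L_iff by auto
      obtain x where "x \<in> P" "x \<subseteq> l" "x \<subseteq> m" "\<theta> x = x" using FL2[OF h(1) h(3) h(2) h(4) lm(3)] by blast
      then show "\<exists>p\<in>S. p \<subseteq> l \<and> p \<subseteq> m" using S_iff by blast
    qed
  qed (rule quad)
  obtain m1 where m1: "m1 \<in> Hy" "c1 \<subseteq> m1" "c2 \<subseteq> m1" "im m1 = m1" using FP2[OF c1(1) c2(1) c12 fc1(1) fc2(1)] by blast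
  obtain m2 where m2: "m2 \<in> Hy" "c1 \<subseteq> m2" "c3 \<subseteq> m2" "im m2 = m2" using FP2[OF c1(1) c3(1) c13 fc1(1) fc3(1)] by blast
  have B1: "\<exists>p\<in>S. p \<subseteq> l" if l: "l \<in> Hy" for l
  proof (cases "im l = l")
    case False
    obtain x where x: "x \<in> P" "x \<subseteq> l" "x \<subseteq> im l" using share_point[OF n2 l imH[OF l]] by blast
    have "\<theta> x = x" using L1[OF l False x] .
    then show ?thesis using x S_iff by blast
  next
    case True
    show ?thesis
    proof (cases "l = m1")
      case False
      obtain x where "x \<in> P" "x \<subseteq> l" "x \<subseteq> m1" "\<theta> x = x" using FL2[OF l m1(1) True m1(4) False] by blast
      then show ?thesis using S_iff by blast
    next
      case lm1: True
      show ?thesis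
      proof (cases "l = m2")
        case False
        obtain x where "x \<in> P" "x \<subseteq> l" "x \<subseteq> m2" "\<theta> x = x" using FL2[OF l m2(1) True m2(4) False] by blast
        then show ?thesis using S_iff by blast
      next
        case True
        have "col c1 c2 c3" using hyp2_col[of l c1 c2 c3] l c1(1) c2(1) c3(1) c12 m1 m2 lm1 True n2' by simp
        then show ?thesis using n123 by simp
      qed
    qed
  qed
  have B2: "\<exists>l\<in>L. p \<subseteq> l" if p: "p \<in> P" for p
  proof (cases "\<theta> p = p")
    case False
    obtain l where l: "l \<in> Hy" "p \<subseteq> l" "\<theta> p \<subseteq> l" using through2[OF n2 p thP[OF p]] by blast
    have "im l = l" using L2[OF p False l] .
    then show ?thesis using l L_iff by blast
  next
    case True
    show ?thesis
    proof (cases "p = c1")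
      case False
      obtain l where "l \<in> Hy" "p \<subseteq> l" "c1 \<subseteq> l" "im l = l" using FP2[OF p c1(1) False True fc1(1)] by blast
      then show ?thesis using L_iff by blast
    next
      case True
      then show ?thesis using m1 L_iff by blast
    qed
  qed
  have "baer_subplane S L"
    unfolding baer_subplane_def using sub B1 B2 n2' by simp
  then show ?thesis unfolding baer_collineation_def S_def L_def using coll n2' by simp
qed

end

theorem proposition4p2:
  fixes \<theta> :: "(nat \<Rightarrow> 'k::division_ring) set \<Rightarrow> (nat \<Rightarrow> 'k) set"
    and n :: nat
  assumes "n \<ge> 2"
    and "collineation n \<theta>"
    and "\<exists>p\<in>pg_points n. \<theta> p \<noteq> p"
    and "polar_22_kangaroo n \<theta>"
  shows "central_collineation n \<theta> \<or> (n = 2 \<and> baer_collineation \<theta>)"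
proof -
  interpret kg n \<theta> using assms(1,2,4) by unfold_locales
  obtain K where K: "K \<in> pg_hyperplanes n" "hyp_image n \<theta> K \<noteq> K" using exists_nonfixed_hyp[OF assms(3)] by blast
  interpret kgK n \<theta> K using K by unfold_locales
  obtain q0 where q0: "NS q0" using ex_q0 by blast
  show ?thesis
  proof (cases "\<forall>r1 r2. NS r1 \<and> r1 \<noteq> q0 \<and> NS r2 \<and> r2 \<noteq> q0 \<longrightarrow> cf q0 r1 = cf q0 r2")
    case True
    then obtain A where "A \<in> pg_hyperplanes n" "\<forall>p\<in>pg_points n. p \<subseteq> A \<longrightarrow> \<theta> p = p"
      using center_case[OF q0] by blast
    then have "central_collineation n \<theta>" unfolding central_collineation_def using assms(2) by blast
    then show ?thesis by simp
  next
    case False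
    then obtain r1 r2 where r: "NS r1" "r1 \<noteq> q0" "NS r2" "r2 \<noteq> q0" "cf q0 r1 \<noteq> cf q0 r2" by blast
    show ?thesis
    proof (cases "n \<ge> 3")
      case True then show ?thesis using n3_contra[OF True q0 r(1,2) r(3,4) r(5)] by blast
    next
      case False
      then have "n = 2" using assms(1) by simp
      then show ?thesis using baer_case[OF _ q0 r(1,2) r(3,4) r(5)] by simp
    qed
  qed
qed

end
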